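(* Let $H$ be a Hamiltonian on a finite-dimensional Hilbert space with a nondegenerate ground state, and let $\rho$ be any state. Then for every $\beta\in(0,\infty)$, $$F(\rho)\le F_\beta(\rho)-F_\beta(\gamma_\beta),$$ and if $0<\beta(\rho)<\infty$ (equivalently $0<S(\rho)<\log d$) equality holds at $\beta=\beta(\rho)$. In particular, in that case $F(\rho)=\min_{\beta>0}\big(F_\beta(\rho)-F_\beta(\gamma_\beta)\big)$, with the minimum attained at the intrinsic inverse temperature $\beta(\rho)$.
   Context: For a finite-dimensional system with Hilbert space of dimension $d\ge 2$ and Hamiltonian $H$ having a nondegenerate smallest eigenvalue: $E(\rho)={\operatorname{Tr}}(H\rho)$, $S(\rho)=-{\operatorname{Tr}}\rho\log\rho$. For $\beta\in[0,\infty)$, $\gamma_\beta=e^{-\beta H}/{\operatorname{Tr}}(e^{-\beta H})$, and $\gamma_\infty$ is the ground-state projector. The intrinsic inverse temperature $\beta(\rho)\in[0,\infty]$ is the unique $\beta$ with $S(\gamma_\beta)=S(\rho)$ (the map $\beta\mapsto S(\gamma_\beta)$ being a strictly decreasing bijection $[0,\infty]\to[0,\log d]$). Bound energy: $B(\rho)=\min\{E(\sigma):S(\sigma)=S(\rho)\}$ (which equals $E(\gamma_{\beta(\rho)})$); free energy: $F(\rho)=E(\rho)-B(\rho)$. For $\beta>0$ the $\beta$-free energy is $F_\beta(\rho)=E(\rho)-\beta^{-1}S(\rho)$. *)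

theory Defs
  imports "Jordan_Normal_Form.Schur_Decomposition" "Jordan_Normal_Form.Char_Poly"
    "HOL-Computational_Algebra.Fundamental_Theorem_Algebra"
    "HOL-Library.Extended_Real"
begin

definition trace :: "complex mat \<Rightarrow> complex" where
  "trace A = (\<Sum>i<dim_row A. A $$ (i,i))"

definition hermitian_mat :: "nat \<Rightarrow> complex mat \<Rightarrow> bool" where
  "hermitian_mat d A \<longleftrightarrow> A \<in> carrier_mat d d \<and> mat_adjoint A = A"

definition is_state :: "nat \<Rightarrow> complex mat \<Rightarrow> bool" where
  "is_state d \<rho> \<longleftrightarrow> hermitian_mat d \<rho>
     \<and> (\<forall>v \<in> carrier_vec d. Re ((\<rho> *\<^sub>v v) \<bullet>c v) \<ge> 0)
     \<and> trace \<rho> = 1"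

definition eigvals :: "complex mat \<Rightarrow> complex multiset" where
  "eigvals A = proots (char_poly A)"

definition xlogx :: "real \<Rightarrow> real" where
  "xlogx x = (if x = 0 then 0 else x * ln x)"

(* von Neumann entropy S(rho) = - Tr rho log rho = - sum over eigenvalues of l log l *)
definition entropy :: "complex mat \<Rightarrow> real" where
  "entropy \<rho> = - (\<Sum>l\<in>#eigvals \<rho>. xlogx (Re l))"

definition energy :: "complex mat \<Rightarrow> complex mat \<Rightarrow> real" where
  "energy H \<rho> = Re (trace (H * \<rho>))"

definition mat_exp :: "complex mat \<Rightarrow> complex mat" where
  "mat_exp A = mat (dim_row A) (dim_col A)
     (\<lambda>(i,j). \<Sum>k. (A ^\<^sub>m k) $$ (i,j) / of_nat (fact k))"

definition gibbs :: "complex mat \<Rightarrow> real \<Rightarrow> complex mat" where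
  "gibbs H \<beta> = (1 / trace (mat_exp ((- complex_of_real \<beta>) \<cdot>\<^sub>m H)))
                  \<cdot>\<^sub>m mat_exp ((- complex_of_real \<beta>) \<cdot>\<^sub>m H)"

definition min_eig :: "complex mat \<Rightarrow> real" where
  "min_eig H = Min (Re ` set_mset (eigvals H))"

definition nondeg_ground :: "complex mat \<Rightarrow> bool" where
  "nondeg_ground H \<longleftrightarrow> count (eigvals H) (complex_of_real (min_eig H)) = 1"

definition ground_proj :: "complex mat \<Rightarrow> complex mat" where
  "ground_proj H = (THE P. hermitian_mat (dim_row H) P \<and> P * P = P \<and> trace P = 1
                          \<and> H * P = complex_of_real (min_eig H) \<cdot>\<^sub>m P)"

definition gibbs_e :: "complex mat \<Rightarrow> ereal \<Rightarrow> complex mat" where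
  "gibbs_e H b = (case b of ereal r \<Rightarrow> gibbs H r | _ \<Rightarrow> ground_proj H)"

definition beta_intr :: "complex mat \<Rightarrow> complex mat \<Rightarrow> ereal" where
  "beta_intr H \<rho> = (THE b. 0 \<le> b \<and> entropy (gibbs_e H b) = entropy \<rho>)"

definition bound_energy :: "complex mat \<Rightarrow> complex mat \<Rightarrow> real" where
  "bound_energy H \<rho> = Inf (energy H ` {\<sigma>. is_state (dim_row H) \<sigma> \<and> entropy \<sigma> = entropy \<rho>})"

definition free_energy :: "complex mat \<Rightarrow> complex mat \<Rightarrow> real" where
  "free_energy H \<rho> = energy H \<rho> - bound_energy H \<rho>"

definition beta_free_energy :: "complex mat \<Rightarrow> real \<Rightarrow> complex mat \<Rightarrow> real" where
  "beta_free_energy H \<beta> \<rho> = energy H \<rho> - entropy \<rho> / \<beta>"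

end

theory Submission
  imports Defs
begin

definition unit_fun :: "nat \<Rightarrow> (nat \<Rightarrow> nat \<Rightarrow> complex) \<Rightarrow> bool" where
 "unit_fun n U \<longleftrightarrow> (\<forall>i<n. \<forall>j<n. (\<Sum>a<n. cnj (U a i) * U a j) = (if i=j then 1 else 0))
     \<and> (\<forall>a<n. \<forall>b<n. (\<Sum>i<n. U a i * cnj (U b i)) = (if a=b then 1 else 0))"

definition spec :: "nat \<Rightarrow> (nat\<Rightarrow>nat\<Rightarrow>complex) \<Rightarrow> (nat \<Rightarrow> real) \<Rightarrow> complex mat \<Rightarrow> bool" where
 "spec n U l M \<longleftrightarrow> unit_fun n U \<and> M \<in> carrier_mat n n
     \<and> (\<forall>a<n. \<forall>b<n. M $$ (a,b) = (\<Sum>i<n. U a i * of_real (l i) * cnj (U b i)))"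

lemma spec_eigvals:
  assumes "spec n U l M"
  shows "eigvals M = image_mset (\<lambda>i. complex_of_real (l i)) (mset [0..<n])"
proof -
  have U: "unit_fun n U" and M: "M \<in> carrier_mat n n"
    and Me: "\<And>a b. a<n \<Longrightarrow> b<n \<Longrightarrow> M $$ (a,b) = (\<Sum>i<n. U a i * of_real (l i) * cnj (U b i))"
    using assms unfolding spec_def by auto
  define P where "P = mat n n (\<lambda>(a,i). U a i)"
  define Q where "Q = mat n n (\<lambda>(i,b). cnj (U b i))"
  define D where "D = mat n n (\<lambda>(i,j). if i = j then complex_of_real (l i) else 0)"
  have PQ: "P * Q = 1\<^sub>m n"
    using U unfolding unit_fun_def
    by (auto simp: P_def Q_def scalar_prod_def atLeast0LessThan intro!: eq_matI)
  have QP: "Q * P = 1\<^sub>m n"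
    using U unfolding unit_fun_def
    by (auto simp: P_def Q_def scalar_prod_def atLeast0LessThan intro!: eq_matI)
  have PD: "P * D = mat n n (\<lambda>(a,i). U a i * complex_of_real (l i))"
  proof (rule eq_matI)
    fix a i assume "a < dim_row (mat n n (\<lambda>(a,i). U a i * complex_of_real (l i)))"
      "i < dim_col (mat n n (\<lambda>(a,i). U a i * complex_of_real (l i)))"
    then have a: "a < n" and i: "i < n" by auto
    have "(P * D) $$ (a,i) = (\<Sum>c\<in>{0..<n}. U a c * (if c = i then complex_of_real (l c) else 0))"
      using a i by (simp add: P_def D_def scalar_prod_def)
    also have "\<dots> = U a i * complex_of_real (l i)"
      by (simp add: if_distrib[of "\<lambda>x. U a _ * x"] sum.delta' i cong: if_cong)
    finally show "(P * D) $$ (a,i) = mat n n (\<lambda>(a,i). U a i * complex_of_real (l i)) $$ (a,i)"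
      using a i by simp
  qed (auto simp: P_def D_def)
  have MPDQ: "M = P * D * Q"
  proof (rule eq_matI)
    fix a b assume "a < dim_row (P * D * Q)" "b < dim_col (P * D * Q)"
    then have a: "a < n" and b: "b < n" by (auto simp: P_def Q_def)
    show "M $$ (a,b) = (P * D * Q) $$ (a,b)"
      unfolding PD using a b Me[OF a b]
      by (simp add: Q_def scalar_prod_def atLeast0LessThan)
  qed (use M in \<open>auto simp: P_def Q_def\<close>)
  have sim: "similar_mat M D"
    unfolding similar_mat_def similar_mat_wit_def
    using M PQ QP MPDQ
    by (intro exI[of _ P] exI[of _ Q]) (auto simp: P_def Q_def D_def Let_def)
  have Dc: "D \<in> carrier_mat n n" by (simp add: D_def)
  have ut: "upper_triangular D" by (simp add: D_def upper_triangular_def)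
  have "char_poly M = char_poly D" by (rule char_poly_similar[OF sim])
  also have "\<dots> = (\<Prod> a \<leftarrow> diag_mat D. [:- a, 1:])"
    by (rule char_poly_upper_triangular[OF Dc ut])
  finally have cp: "char_poly M = (\<Prod> a \<leftarrow> diag_mat D. [:- a, 1:])" .
  have dm: "diag_mat D = map (\<lambda>i. complex_of_real (l i)) [0..<n]"
    by (simp add: diag_mat_def D_def)
  have "eigvals M = (\<Sum>p\<leftarrow>map (\<lambda>a. [:- a, 1:]) (diag_mat D). proots p)"
    unfolding eigvals_def cp
    by (subst proots_prod_list[symmetric]) (auto simp: o_def)
  also have "\<dots> = image_mset (\<lambda>i. complex_of_real (l i)) (mset [0..<n])"
    unfolding dm by (induction n) auto
  finally show ?thesis .
qed


lemma delta_sum1[simp]: "a < (n::nat) \<Longrightarrow> (\<Sum>b<n. f b * (if a = b then 1 else 0)) = (f a :: 'a::comm_ring_1)"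
proof -
  assume "a < n"
  have "(\<Sum>b<n. f b * (if a = b then 1 else 0)) = (\<Sum>b<n. if a = b then f b else 0)"
    by (rule sum.cong) auto
  then show ?thesis using \<open>a < n\<close> by (simp add: sum.delta sum.delta')
qed
lemma delta_sum2[simp]: "a < (n::nat) \<Longrightarrow> (\<Sum>b<n. f b * (if b = a then 1 else 0)) = (f a :: 'a::comm_ring_1)"
proof -
  assume "a < n"
  have "(\<Sum>b<n. f b * (if b = a then 1 else 0)) = (\<Sum>b<n. if b = a then f b else 0)"
    by (rule sum.cong) auto
  then show ?thesis using \<open>a < n\<close> by (simp add: sum.delta sum.delta')
qed

lemma adjoint_index:
  "i < dim_col A \<Longrightarrow> j < dim_row A \<Longrightarrow> mat_adjoint A $$ (i,j) = cnj (A $$ (j,i))"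
  "dim_row (mat_adjoint A) = dim_col A" "dim_col (mat_adjoint A) = dim_row A"
  by (auto simp: mat_adjoint_def mat_of_rows_def)

lemma spec_trace:
  assumes "spec n U l M"
  shows "trace M = (\<Sum>i<n. complex_of_real (l i))"
proof -
  have U: "\<And>i. i < n \<Longrightarrow> (\<Sum>a<n. cnj (U a i) * U a i) = 1"
    using assms unfolding spec_def unit_fun_def by auto
  have "trace M = (\<Sum>a<n. \<Sum>i<n. U a i * of_real (l i) * cnj (U a i))"
    using assms unfolding spec_def trace_def by auto
  also have "\<dots> = (\<Sum>i<n. of_real (l i) * (\<Sum>a<n. cnj (U a i) * U a i))"
    by (subst sum.swap) (simp add: sum_distrib_left mult_ac)
  also have "\<dots> = (\<Sum>i<n. complex_of_real (l i))"
    using U by simp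
  finally show ?thesis .
qed

lemma spec_hermitian:
  assumes "spec n U l M"
  shows "hermitian_mat n M"
proof -
  have M: "M \<in> carrier_mat n n" using assms by (simp add: spec_def)
  show ?thesis unfolding hermitian_mat_def
  proof (intro conjI M eq_matI)
    fix i j assume "i < dim_row M" "j < dim_col M"
    then have i: "i < n" and j: "j < n" using M by auto
    show "mat_adjoint M $$ (i,j) = M $$ (i,j)"
      using assms i j M unfolding spec_def
      by (simp add: adjoint_index mult_ac)
  qed (use M in \<open>auto simp: adjoint_index\<close>)
qed

lemma spec_quad:
  assumes "spec n U l M" "v \<in> carrier_vec n"
  shows "(M *\<^sub>v v) \<bullet>c v = (\<Sum>i<n. complex_of_real (l i) *
      (cnj (\<Sum>b<n. cnj (U b i) * v $ b) * (\<Sum>b<n. cnj (U b i) * v $ b)))"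
proof -
  have M: "M \<in> carrier_mat n n"
    and Me: "\<And>a b. a<n \<Longrightarrow> b<n \<Longrightarrow> M $$ (a,b) = (\<Sum>i<n. U a i * of_real (l i) * cnj (U b i))"
    using assms unfolding spec_def by auto
  have "(M *\<^sub>v v) \<bullet>c v = (\<Sum>a<n. (\<Sum>b<n. M $$ (a,b) * v $ b) * cnj (v $ a))"
    using M assms(2) by (simp add: scalar_prod_def atLeast0LessThan)
  also have "\<dots> = (\<Sum>a<n. \<Sum>b<n. \<Sum>i<n. U a i * of_real (l i) * cnj (U b i) * v $ b * cnj (v $ a))"
    by (simp add: Me sum_distrib_right)
  also have "\<dots> = (\<Sum>a<n. \<Sum>i<n. \<Sum>b<n. U a i * of_real (l i) * cnj (U b i) * v $ b * cnj (v $ a))"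
    by (rule sum.cong[OF refl], rule sum.swap)
  also have "\<dots> = (\<Sum>i<n. \<Sum>a<n. \<Sum>b<n. U a i * of_real (l i) * cnj (U b i) * v $ b * cnj (v $ a))"
    by (rule sum.swap)
  also have "\<dots> = (\<Sum>i<n. complex_of_real (l i) *
      (cnj (\<Sum>b<n. cnj (U b i) * v $ b) * (\<Sum>b<n. cnj (U b i) * v $ b)))"
    by (simp add: sum_distrib_left sum_distrib_right sum_product mult_ac)
  finally show ?thesis .
qed


lemma cnj_mult_self: "cnj c * c = complex_of_real ((cmod c)^2)"
  by (subst complex_norm_square) (simp add: mult.commute)

lemma spec_psd:
  assumes "spec n U l M" "\<And>i. i < n \<Longrightarrow> l i \<ge> 0" "v \<in> carrier_vec n"
  shows "Re ((M *\<^sub>v v) \<bullet>c v) \<ge> 0"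
  unfolding spec_quad[OF assms(1,3)] cnj_mult_self Re_sum
  using assms(2) by (auto intro!: sum_nonneg simp del: of_real_power)

lemma spec_eig_nonneg:
  assumes "spec n U l M" "\<forall>v \<in> carrier_vec n. Re ((M *\<^sub>v v) \<bullet>c v) \<ge> 0" "j < n"
  shows "l j \<ge> 0"
proof -
  define v where "v = vec n (\<lambda>b. U b j)"
  have v: "v \<in> carrier_vec n" by (simp add: v_def)
  have U: "\<And>i. i < n \<Longrightarrow> (\<Sum>b<n. cnj (U b i) * v $ b) = (if i = j then 1 else 0)"
    using assms(1,3) unfolding spec_def unit_fun_def v_def by auto
  have "(M *\<^sub>v v) \<bullet>c v = (\<Sum>i<n. complex_of_real (l i) * (if i = j then 1 else 0))"
    unfolding spec_quad[OF assms(1) v] by (rule sum.cong) (auto simp: U)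
  also have "\<dots> = complex_of_real (l j)" using assms(3) by (subst delta_sum2) auto
  finally show ?thesis using assms(2) v by force
qed

definition wm :: "nat \<Rightarrow> (nat\<Rightarrow>nat\<Rightarrow>complex) \<Rightarrow> (nat\<Rightarrow>nat\<Rightarrow>complex) \<Rightarrow> nat \<Rightarrow> nat \<Rightarrow> complex" where
  "wm n U V i j = (\<Sum>b<n. cnj (U b i) * V b j)"

lemma spec_energy:
  assumes H: "spec n U h H" and S: "spec n V p S"
  shows "trace (H * S) = (\<Sum>i<n. \<Sum>j<n. of_real (h i) * of_real (p j) * (cnj (wm n U V i j) * wm n U V i j))"
proof -
  have Hc: "H \<in> carrier_mat n n" and Sc: "S \<in> carrier_mat n n"
    and He: "\<And>a b. a<n \<Longrightarrow> b<n \<Longrightarrow> H $$ (a,b) = (\<Sum>i<n. U a i * of_real (h i) * cnj (U b i))"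
    and Se: "\<And>a b. a<n \<Longrightarrow> b<n \<Longrightarrow> S $$ (a,b) = (\<Sum>i<n. V a i * of_real (p i) * cnj (V b i))"
    using H S unfolding spec_def by auto
  have "trace (H * S) = (\<Sum>a<n. \<Sum>b<n. H $$ (a,b) * S $$ (b,a))"
    unfolding trace_def using Hc Sc by (simp add: scalar_prod_def atLeast0LessThan)
  also have "\<dots> = (\<Sum>a<n. \<Sum>b<n. \<Sum>i<n. \<Sum>j<n. U a i * of_real (h i) * cnj (U b i) * (V b j * of_real (p j) * cnj (V a j)))"
    by (simp add: He Se sum_product)
  also have "\<dots> = (\<Sum>a<n. \<Sum>i<n. \<Sum>b<n. \<Sum>j<n. U a i * of_real (h i) * cnj (U b i) * (V b j * of_real (p j) * cnj (V a j)))"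
    by (rule sum.cong[OF refl], rule sum.swap)
  also have "\<dots> = (\<Sum>a<n. \<Sum>i<n. \<Sum>j<n. \<Sum>b<n. U a i * of_real (h i) * cnj (U b i) * (V b j * of_real (p j) * cnj (V a j)))"
    by (rule sum.cong[OF refl], rule sum.cong[OF refl], rule sum.swap)
  also have "\<dots> = (\<Sum>i<n. \<Sum>a<n. \<Sum>j<n. \<Sum>b<n. U a i * of_real (h i) * cnj (U b i) * (V b j * of_real (p j) * cnj (V a j)))"
    by (rule sum.swap)
  also have "\<dots> = (\<Sum>i<n. \<Sum>j<n. \<Sum>a<n. \<Sum>b<n. U a i * of_real (h i) * cnj (U b i) * (V b j * of_real (p j) * cnj (V a j)))"
    by (rule sum.cong[OF refl], rule sum.swap)
  also have "\<dots> = (\<Sum>i<n. \<Sum>j<n. of_real (h i) * of_real (p j) * (cnj (wm n U V i j) * wm n U V i j))"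
    by (simp add: wm_def sum_distrib_left sum_distrib_right sum_product mult_ac)
      (rule sum.cong[OF refl], rule sum.cong[OF refl], rule sum.swap)
  finally show ?thesis .
qed

lemma wm_col:
  assumes "unit_fun n U" "unit_fun n V" "j < n"
  shows "(\<Sum>i<n. cnj (wm n U V i j) * wm n U V i j) = 1"
proof -
  have U2: "\<And>a b. a<n \<Longrightarrow> b<n \<Longrightarrow> (\<Sum>i<n. U a i * cnj (U b i)) = (if a=b then 1 else 0)"
    and V1: "(\<Sum>a<n. cnj (V a j) * V a j) = 1"
    using assms unfolding unit_fun_def by auto
  have "(\<Sum>i<n. cnj (wm n U V i j) * wm n U V i j)
      = (\<Sum>i<n. \<Sum>a<n. \<Sum>b<n. cnj (V a j) * V b j * (U a i * cnj (U b i)))"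
    by (simp add: wm_def sum_distrib_left sum_distrib_right sum_product mult_ac)
      (rule sum.cong[OF refl], rule sum.swap)
  also have "\<dots> = (\<Sum>a<n. \<Sum>i<n. \<Sum>b<n. cnj (V a j) * V b j * (U a i * cnj (U b i)))"
    by (rule sum.swap)
  also have "\<dots> = (\<Sum>a<n. \<Sum>b<n. \<Sum>i<n. cnj (V a j) * V b j * (U a i * cnj (U b i)))"
    by (rule sum.cong[OF refl], rule sum.swap)
  also have "\<dots> = (\<Sum>a<n. \<Sum>b<n. cnj (V a j) * V b j * (if a = b then 1 else 0))"
    by (intro sum.cong refl) (simp add: U2 flip: sum_distrib_left)
  also have "\<dots> = 1" using V1 by simp
  finally show ?thesis .
qed

lemma wm_row:
  assumes "unit_fun n U" "unit_fun n V" "i < n"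
  shows "(\<Sum>j<n. cnj (wm n U V i j) * wm n U V i j) = 1"
proof -
  have V2: "\<And>a b. a<n \<Longrightarrow> b<n \<Longrightarrow> (\<Sum>j<n. V a j * cnj (V b j)) = (if a=b then 1 else 0)"
    and U1: "(\<Sum>a<n. cnj (U a i) * U a i) = 1"
    using assms unfolding unit_fun_def by auto
  have "(\<Sum>j<n. cnj (wm n U V i j) * wm n U V i j)
      = (\<Sum>j<n. \<Sum>a<n. \<Sum>b<n. U a i * cnj (U b i) * (V b j * cnj (V a j)))"
    by (simp add: wm_def sum_distrib_left sum_distrib_right sum_product mult_ac)
      (rule sum.cong[OF refl], rule sum.swap)
  also have "\<dots> = (\<Sum>a<n. \<Sum>j<n. \<Sum>b<n. U a i * cnj (U b i) * (V b j * cnj (V a j)))"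
    by (rule sum.swap)
  also have "\<dots> = (\<Sum>a<n. \<Sum>b<n. \<Sum>j<n. U a i * cnj (U b i) * (V b j * cnj (V a j)))"
    by (rule sum.cong[OF refl], rule sum.swap)
  also have "\<dots> = (\<Sum>a<n. \<Sum>b<n. U a i * cnj (U b i) * (if b = a then 1 else 0))"
    by (intro sum.cong refl) (simp add: V2 flip: sum_distrib_left)
  also have "\<dots> = (\<Sum>a<n. U a i * cnj (U a i))" by simp
  also have "\<dots> = (\<Sum>a<n. cnj (U a i) * U a i)" by (simp add: mult.commute)
  also have "\<dots> = 1" using U1 by simp
  finally show ?thesis .
qed

lemma wm_self:
  assumes "unit_fun n U" "i < n" "j < n"
  shows "wm n U U i j = (if i = j then 1 else 0)"
  using assms unfolding unit_fun_def wm_def by auto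


lemma spec_scale:
  assumes "spec n U l M"
  shows "spec n U (\<lambda>i. c * l i) (complex_of_real c \<cdot>\<^sub>m M)"
  using assms unfolding spec_def
  by (auto simp: sum_distrib_left mult_ac)

lemma spec_pow:
  assumes "spec n U l M" "a < n" "b < n"
  shows "(M ^\<^sub>m k) $$ (a,b) = (\<Sum>i<n. U a i * of_real (l i) ^ k * cnj (U b i))"
  using assms(2,3)
proof (induction k arbitrary: a b)
  case 0
  then show ?case using assms(1) unfolding spec_def unit_fun_def by auto
next
  case (Suc k)
  have M: "M \<in> carrier_mat n n"
    and Me: "\<And>a b. a<n \<Longrightarrow> b<n \<Longrightarrow> M $$ (a,b) = (\<Sum>i<n. U a i * of_real (l i) * cnj (U b i))"
    and U1: "\<And>i j. i<n \<Longrightarrow> j<n \<Longrightarrow> (\<Sum>c<n. cnj (U c i) * U c j) = (if i=j then 1 else 0)"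
    using assms(1) unfolding spec_def unit_fun_def by auto
  have "(M ^\<^sub>m Suc k) $$ (a,b) = (\<Sum>c<n. (M ^\<^sub>m k) $$ (a,c) * M $$ (c,b))"
    using Suc.prems M by (simp add: scalar_prod_def atLeast0LessThan)
  also have "\<dots> = (\<Sum>c<n. \<Sum>i<n. \<Sum>j<n. U a i * of_real (l i) ^ k * of_real (l j) * cnj (U b j) * (cnj (U c i) * U c j))"
    using Suc.prems by (simp add: Suc.IH Me sum_product mult_ac) (rule sum.cong[OF refl], rule sum.swap)
  also have "\<dots> = (\<Sum>i<n. \<Sum>c<n. \<Sum>j<n. U a i * of_real (l i) ^ k * of_real (l j) * cnj (U b j) * (cnj (U c i) * U c j))"
    by (rule sum.swap)
  also have "\<dots> = (\<Sum>i<n. \<Sum>j<n. \<Sum>c<n. U a i * of_real (l i) ^ k * of_real (l j) * cnj (U b j) * (cnj (U c i) * U c j))"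
    by (rule sum.cong[OF refl], rule sum.swap)
  also have "\<dots> = (\<Sum>i<n. \<Sum>j<n. U a i * of_real (l i) ^ k * of_real (l j) * cnj (U b j) * (if i = j then 1 else 0))"
    by (intro sum.cong refl) (simp add: U1 flip: sum_distrib_left)
  also have "\<dots> = (\<Sum>i<n. U a i * of_real (l i) ^ Suc k * cnj (U b i))"
    by (intro sum.cong refl) (subst delta_sum1; simp add: mult_ac)
  finally show ?case .
qed

lemma spec_exp:
  assumes "spec n U l M"
  shows "spec n U (\<lambda>i. exp (l i)) (mat_exp M)"
proof -
  have M: "M \<in> carrier_mat n n" using assms by (simp add: spec_def)
  have "mat_exp M $$ (a,b) = (\<Sum>i<n. U a i * of_real (exp (l i)) * cnj (U b i))"
    if ab: "a < n" "b < n" for a b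
  proof -
    have "mat_exp M $$ (a,b) = (\<Sum>k. (M ^\<^sub>m k) $$ (a,b) / of_nat (fact k))"
      using M ab by (simp add: mat_exp_def)
    also have "\<dots> = (\<Sum>k. \<Sum>i<n. U a i * cnj (U b i) * (of_real (l i) ^ k /\<^sub>R fact k))"
      using ab
      by (simp add: spec_pow[OF assms] sum_divide_distrib scaleR_conv_of_real divide_inverse mult_ac sum_distrib_left)
    also have "\<dots> = (\<Sum>i<n. U a i * cnj (U b i) * exp (of_real (l i)))"
      by (rule sums_unique[symmetric], rule sums_sum, rule sums_mult, rule exp_converges)
    also have "\<dots> = (\<Sum>i<n. U a i * of_real (exp (l i)) * cnj (U b i))"
      by (simp add: exp_of_real mult_ac)
    finally show ?thesis .
  qed
  then show ?thesis using assms M unfolding spec_def by (auto simp: mat_exp_def)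
qed


lemma xlogx_ge:
  assumes "p \<ge> 0" "t > 0"
  shows "xlogx p \<ge> p * ln t + p - t"
proof (cases "p = 0")
  case True then show ?thesis using assms by (simp add: xlogx_def)
next
  case False
  then have p: "p > 0" using assms by simp
  have "ln (t/p) \<le> t/p - 1" using p assms by (intro ln_le_minus_one) simp
  then have "p * ln (t/p) \<le> p * (t/p - 1)" using p by (intro mult_left_mono) auto
  then have "p * (ln t - ln p) \<le> t - p" using p assms by (simp add: ln_div right_diff_distrib)
  then show ?thesis using False by (simp add: xlogx_def algebra_simps)
qed

lemma xlogx_gt:
  assumes "p \<ge> 0" "t > 0" "p \<noteq> t"
  shows "xlogx p > p * ln t + p - t"
proof (cases "p = 0")
  case True then show ?thesis using assms by (simp add: xlogx_def)
next
  case False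
  then have p: "p > 0" using assms by simp
  have "ln (t/p) \<le> t/p - 1" using p assms by (intro ln_le_minus_one) simp
  moreover have "ln (t/p) \<noteq> t/p - 1"
  proof
    assume "ln (t/p) = t/p - 1"
    then have "t/p = 1" using p assms by (intro ln_eq_minus_one) auto
    then show False using p assms by simp
  qed
  ultimately have "ln (t/p) < t/p - 1" by simp
  then have "p * ln (t/p) < p * (t/p - 1)" using p by (intro mult_strict_left_mono) auto
  then have "p * (ln t - ln p) < t - p" using p assms by (simp add: ln_div right_diff_distrib)
  then show ?thesis using False by (simp add: xlogx_def algebra_simps)
qed

lemma jensen_exp:
  fixes c y :: "nat \<Rightarrow> real"
  assumes "finite A" "(\<Sum>i\<in>A. c i) = 1" "\<And>i. i \<in> A \<Longrightarrow> c i \<ge> 0"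
  shows "exp (\<Sum>i\<in>A. c i * y i) \<le> (\<Sum>i\<in>A. c i * exp (y i))"
proof -
  define m where "m = (\<Sum>i\<in>A. c i * y i)"
  have "(\<Sum>i\<in>A. c i * exp (y i)) = (\<Sum>i\<in>A. exp m * (c i * exp (y i - m)))"
    by (intro sum.cong refl) (simp add: exp_diff)
  also have "\<dots> \<ge> (\<Sum>i\<in>A. exp m * (c i * (1 + (y i - m))))"
    using assms(3) by (intro sum_mono mult_left_mono) auto
  also have "(\<Sum>i\<in>A. exp m * (c i * (1 + (y i - m)))) =
      exp m * ((\<Sum>i\<in>A. c i) + (\<Sum>i\<in>A. c i * y i) - m * (\<Sum>i\<in>A. c i))"
    by (simp add: sum_distrib_left sum.distrib sum_subtractf algebra_simps)
  also have "\<dots> = exp m" using assms(2) by (simp add: m_def)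
  finally show ?thesis by (simp add: m_def)
qed

lemma sum_pos_n: "(\<Sum>j<n. p j) = (1::real) \<Longrightarrow> (n::nat) > 0"
  by (cases n) auto

lemma gibbs_classical:
  fixes h p :: "nat \<Rightarrow> real" and c :: "nat \<Rightarrow> nat \<Rightarrow> real" and \<beta> :: real
  assumes p0: "\<And>j. j < n \<Longrightarrow> p j \<ge> 0" and p1: "(\<Sum>j<n. p j) = 1"
    and c0: "\<And>i j. i < n \<Longrightarrow> j < n \<Longrightarrow> c i j \<ge> 0"
    and ccol: "\<And>j. j < n \<Longrightarrow> (\<Sum>i<n. c i j) = 1"
    and crow: "\<And>i. i < n \<Longrightarrow> (\<Sum>j<n. c i j) = 1"
  shows "(\<Sum>j<n. xlogx (p j)) + \<beta> * (\<Sum>i<n. \<Sum>j<n. h i * p j * c i j)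
         \<ge> - ln (\<Sum>i<n. exp (- \<beta> * h i))"
proof -
  define Z where "Z = (\<Sum>i<n. exp (- \<beta> * h i))"
  define a where "a j = (\<Sum>i<n. c i j * h i)" for j
  define t where "t j = exp (- \<beta> * a j) / Z" for j
  have n: "n > 0" using sum_pos_n[OF p1] .
  have Z: "Z > 0" unfolding Z_def using n by (intro sum_pos) auto
  have t: "t j > 0" for j using Z by (simp add: t_def)
  have ea: "exp (- \<beta> * a j) \<le> (\<Sum>i<n. c i j * exp (- \<beta> * h i))" if "j < n" for j
  proof -
    have "exp (- \<beta> * a j) = exp (\<Sum>i<n. c i j * (- \<beta> * h i))"
      by (simp add: a_def sum_distrib_left algebra_simps)
    also have "\<dots> \<le> (\<Sum>i<n. c i j * exp (- \<beta> * h i))"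
      using that c0 ccol by (intro jensen_exp) auto
    finally show ?thesis .
  qed
  have "(\<Sum>j<n. exp (- \<beta> * a j)) \<le> (\<Sum>j<n. \<Sum>i<n. c i j * exp (- \<beta> * h i))"
    using ea by (intro sum_mono) auto
  also have "\<dots> = (\<Sum>i<n. \<Sum>j<n. c i j * exp (- \<beta> * h i))"
    by (rule sum.swap)
  also have "\<dots> = (\<Sum>i<n. exp (- \<beta> * h i) * (\<Sum>j<n. c i j))"
    by (simp add: sum_distrib_right mult.commute)
  also have "\<dots> = Z" using crow by (simp add: Z_def)
  finally have "(\<Sum>j<n. exp (- \<beta> * a j)) \<le> Z" .
  then have tsum: "(\<Sum>j<n. t j) \<le> 1" using Z by (simp add: t_def flip: sum_divide_distrib)
  have lnt: "ln (t j) = - \<beta> * a j - ln Z" for j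
    using Z by (simp add: t_def ln_div)
  have "(\<Sum>j<n. xlogx (p j)) \<ge> (\<Sum>j<n. p j * ln (t j) + p j - t j)"
    using p0 t by (intro sum_mono xlogx_ge) auto
  also have "(\<Sum>j<n. p j * ln (t j) + p j - t j) =
      (\<Sum>j<n. p j * ln (t j)) + (\<Sum>j<n. p j) - (\<Sum>j<n. t j)"
    by (simp add: sum.distrib sum_subtractf)
  also have "(\<Sum>j<n. p j * ln (t j)) = (\<Sum>j<n. \<beta> * (p j * a j) * (-1) - ln Z * p j)"
    by (intro sum.cong refl) (simp add: lnt algebra_simps)
  also have "\<dots> = - \<beta> * (\<Sum>j<n. p j * a j) - ln Z * (\<Sum>j<n. p j)"
    by (simp add: sum_subtractf sum_distrib_left flip: sum_distrib_right)
  finally have 1: "(\<Sum>j<n. xlogx (p j)) \<ge> - \<beta> * (\<Sum>j<n. p j * a j) - ln Z"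
    using p1 tsum by simp
  have "(\<Sum>j<n. p j * a j) = (\<Sum>i<n. \<Sum>j<n. h i * p j * c i j)"
    unfolding a_def by (subst sum.swap) (simp add: sum_distrib_left mult_ac)
  then show ?thesis using 1 by (simp add: Z_def)
qed

lemma gibbs_classical_strict:
  fixes h p :: "nat \<Rightarrow> real" and \<beta> :: real
  assumes p0: "\<And>j. j < n \<Longrightarrow> p j \<ge> 0" and p1: "(\<Sum>j<n. p j) = 1"
    and ne: "\<exists>j<n. p j \<noteq> exp (- \<beta> * h j) / (\<Sum>i<n. exp (- \<beta> * h i))"
  shows "(\<Sum>j<n. xlogx (p j)) + \<beta> * (\<Sum>j<n. h j * p j)
         > - ln (\<Sum>i<n. exp (- \<beta> * h i))"
proof -
  define Z where "Z = (\<Sum>i<n. exp (- \<beta> * h i))"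
  define t where "t j = exp (- \<beta> * h j) / Z" for j
  have n: "n > 0" using sum_pos_n[OF p1] .
  have Z: "Z > 0" unfolding Z_def using n by (intro sum_pos) auto
  have t: "t j > 0" for j using Z by (simp add: t_def)
  have tsum: "(\<Sum>j<n. t j) = 1" using Z by (simp add: t_def Z_def flip: sum_divide_distrib)
  have lnt: "ln (t j) = - \<beta> * h j - ln Z" for j
    using Z by (simp add: t_def ln_div)
  have "(\<Sum>j<n. xlogx (p j)) > (\<Sum>j<n. p j * ln (t j) + p j - t j)"
  proof (rule sum_strict_mono_ex1)
    show "\<forall>x\<in>{..<n}. p x * ln (t x) + p x - t x \<le> xlogx (p x)"
      using p0 t by (auto intro: xlogx_ge)
    show "\<exists>a\<in>{..<n}. p a * ln (t a) + p a - t a < xlogx (p a)"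
      using ne p0 t by (auto intro!: xlogx_gt simp: t_def Z_def)
  qed simp
  also have "(\<Sum>j<n. p j * ln (t j) + p j - t j) =
      (\<Sum>j<n. p j * ln (t j)) + (\<Sum>j<n. p j) - (\<Sum>j<n. t j)"
    by (simp add: sum.distrib sum_subtractf)
  also have "(\<Sum>j<n. p j * ln (t j)) = (\<Sum>j<n. \<beta> * (h j * p j) * (-1) - ln Z * p j)"
    by (intro sum.cong refl) (simp add: lnt algebra_simps)
  also have "\<dots> = - \<beta> * (\<Sum>j<n. h j * p j) - ln Z * (\<Sum>j<n. p j)"
    by (simp add: sum_subtractf sum_distrib_left flip: sum_distrib_right)
  finally show ?thesis using p1 tsum by (simp add: Z_def)
qed


lemma unit_square:
  assumes "\<And>i j. i < n \<Longrightarrow> j < n \<Longrightarrow> (\<Sum>a<n. cnj (W a i) * W a j) = (if i = j then 1 else 0)"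
  shows "unit_fun n W"
proof -
  define P where "P = mat n n (\<lambda>(a,i). W a i)"
  define Q where "Q = mat n n (\<lambda>(i,b). cnj (W b i))"
  have Pc: "P \<in> carrier_mat n n" and Qc: "Q \<in> carrier_mat n n" by (auto simp: P_def Q_def)
  have QP: "Q * P = 1\<^sub>m n"
    using assms by (auto simp: P_def Q_def scalar_prod_def atLeast0LessThan intro!: eq_matI)
  have PQ: "P * Q = 1\<^sub>m n" by (rule mat_mult_left_right_inverse[OF Qc Pc QP])
  have "(\<Sum>i<n. W a i * cnj (W b i)) = (if a = b then 1 else 0)" if "a < n" "b < n" for a b
  proof -
    have "(P * Q) $$ (a,b) = (\<Sum>i<n. W a i * cnj (W b i))"
      using that by (simp add: P_def Q_def scalar_prod_def atLeast0LessThan)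
    then show ?thesis using PQ that by simp
  qed
  then show ?thesis using assms unfolding unit_fun_def by auto
qed

lemma unit_mult:
  assumes "unit_fun n W" "unit_fun n V"
  shows "unit_fun n (\<lambda>a i. \<Sum>c<n. W a c * V c i)"
proof (rule unit_square)
  fix i j assume ij: "i < n" "j < n"
  have W1: "\<And>c d. c < n \<Longrightarrow> d < n \<Longrightarrow> (\<Sum>a<n. cnj (W a c) * W a d) = (if c = d then 1 else 0)"
    and V1: "(\<Sum>c<n. cnj (V c i) * V c j) = (if i = j then 1 else 0)"
    using assms ij unfolding unit_fun_def by auto
  have "(\<Sum>a<n. cnj (\<Sum>c<n. W a c * V c i) * (\<Sum>d<n. W a d * V d j))
      = (\<Sum>a<n. \<Sum>c<n. \<Sum>d<n. cnj (V c i) * V d j * (cnj (W a c) * W a d))"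
    by (simp add: sum_product mult_ac) (rule sum.cong[OF refl], rule sum.swap)
  also have "\<dots> = (\<Sum>c<n. \<Sum>a<n. \<Sum>d<n. cnj (V c i) * V d j * (cnj (W a c) * W a d))"
    by (rule sum.swap)
  also have "\<dots> = (\<Sum>c<n. \<Sum>d<n. \<Sum>a<n. cnj (V c i) * V d j * (cnj (W a c) * W a d))"
    by (rule sum.cong[OF refl], rule sum.swap)
  also have "\<dots> = (\<Sum>c<n. \<Sum>d<n. cnj (V c i) * V d j * (if c = d then 1 else 0))"
    by (intro sum.cong refl) (simp add: W1 flip: sum_distrib_left)
  also have "\<dots> = (\<Sum>c<n. cnj (V c i) * V c j)"
    by (intro sum.cong refl) simp
  finally show "(\<Sum>a<n. cnj (\<Sum>c<n. W a c * V c i) * (\<Sum>d<n. W a d * V d j)) = (if i = j then 1 else 0)"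
    using V1 by simp
qed

lemma unconj:
  assumes "unit_fun n W" "a < n" "b < n"
  shows "(\<Sum>c<n. \<Sum>d<n. W a c * (\<Sum>x<n. \<Sum>y<n. cnj (W x c) * A x y * W y d) * cnj (W b d)) = A a b"
proof -
  have W2: "\<And>x y. x < n \<Longrightarrow> y < n \<Longrightarrow> (\<Sum>c<n. W x c * cnj (W y c)) = (if x = y then 1 else 0)"
    using assms unfolding unit_fun_def by auto
  have "(\<Sum>c<n. \<Sum>d<n. W a c * (\<Sum>x<n. \<Sum>y<n. cnj (W x c) * A x y * W y d) * cnj (W b d))
     = (\<Sum>c<n. \<Sum>d<n. \<Sum>x<n. \<Sum>y<n. A x y * (W a c * cnj (W x c)) * (W y d * cnj (W b d)))"
    by (simp add: sum_distrib_left sum_distrib_right mult_ac)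
  also have "\<dots> = (\<Sum>c<n. \<Sum>x<n. \<Sum>d<n. \<Sum>y<n. A x y * (W a c * cnj (W x c)) * (W y d * cnj (W b d)))"
    by (rule sum.cong[OF refl], rule sum.swap)
  also have "\<dots> = (\<Sum>x<n. \<Sum>c<n. \<Sum>d<n. \<Sum>y<n. A x y * (W a c * cnj (W x c)) * (W y d * cnj (W b d)))"
    by (rule sum.swap)
  also have "\<dots> = (\<Sum>x<n. \<Sum>c<n. \<Sum>y<n. \<Sum>d<n. A x y * (W a c * cnj (W x c)) * (W y d * cnj (W b d)))"
    by (rule sum.cong[OF refl], rule sum.cong[OF refl], rule sum.swap)
  also have "\<dots> = (\<Sum>x<n. \<Sum>y<n. \<Sum>c<n. \<Sum>d<n. A x y * (W a c * cnj (W x c)) * (W y d * cnj (W b d)))"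
    by (rule sum.cong[OF refl], rule sum.swap)
  also have "\<dots> = (\<Sum>x<n. \<Sum>y<n. A x y * (\<Sum>c<n. W a c * cnj (W x c)) * (\<Sum>d<n. W y d * cnj (W b d)))"
    by (simp add: sum_distrib_left sum_distrib_right mult_ac)
  also have "\<dots> = (\<Sum>x<n. \<Sum>y<n. A x y * (if a = x then 1 else 0) * (if y = b then 1 else 0))"
    using assms by (intro sum.cong refl) (simp add: W2)
  also have "\<dots> = A a b" using assms by simp
  finally show ?thesis .
qed

lemma compose:
  "(\<Sum>c<n. \<Sum>d<n. W a c * (\<Sum>i<n. V c i * complex_of_real (l i) * cnj (V d i)) * cnj (W b d))
   = (\<Sum>i<n. (\<Sum>c<n. W a c * V c i) * complex_of_real (l i) * cnj (\<Sum>d<n. W b d * V d i))"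
proof -
  have "(\<Sum>c<n. \<Sum>d<n. W a c * (\<Sum>i<n. V c i * complex_of_real (l i) * cnj (V d i)) * cnj (W b d))
     = (\<Sum>c<n. \<Sum>d<n. \<Sum>i<n. W a c * V c i * complex_of_real (l i) * cnj (V d i) * cnj (W b d))"
    by (simp add: sum_distrib_left sum_distrib_right mult_ac)
  also have "\<dots> = (\<Sum>c<n. \<Sum>i<n. \<Sum>d<n. W a c * V c i * complex_of_real (l i) * cnj (V d i) * cnj (W b d))"
    by (rule sum.cong[OF refl], rule sum.swap)
  also have "\<dots> = (\<Sum>i<n. \<Sum>c<n. \<Sum>d<n. W a c * V c i * complex_of_real (l i) * cnj (V d i) * cnj (W b d))"
    by (rule sum.swap)
  also have "\<dots> = (\<Sum>i<n. (\<Sum>c<n. W a c * V c i) * complex_of_real (l i) * cnj (\<Sum>d<n. W b d * V d i))"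
    by (simp add: sum_distrib_left sum_distrib_right mult_ac)
  finally show ?thesis .
qed


lemma cself_real:
  assumes "x \<in> carrier_vec n"
  shows "x \<bullet>c x = complex_of_real (\<Sum>a<n. (cmod (x $ a))^2)"
proof -
  have "x \<bullet>c x = (\<Sum>a<n. x $ a * cnj (x $ a))"
    using assms by (simp add: scalar_prod_def atLeast0LessThan)
  also have "\<dots> = (\<Sum>a<n. complex_of_real ((cmod (x $ a))^2))"
    by (intro sum.cong refl) (rule complex_norm_square[symmetric])
  finally show ?thesis by simp
qed

lemma orthonormal_first:
  fixes v :: "complex vec"
  assumes v: "v \<in> carrier_vec n" and v0: "v \<noteq> 0\<^sub>v n"
  shows "\<exists>W k. unit_fun n W \<and> (\<forall>a<n. W a 0 = k * v $ a)"
proof -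
  interpret cof_vec_space n "TYPE(complex)" .
  define b where "b = basis_completion v"
  define ws where "ws = gram_schmidt n b"
  from basis_completion[OF v v0, folded b_def]
  have dist_b: "distinct b" and indep: "\<not> lin_dep (set b)" and bc: "set b \<subseteq> carrier_vec n"
    and hdb: "hd b = v" and len_b: "length b = n" by auto
  have n: "n \<noteq> 0" using v0 v by auto
  from hdb len_b n obtain vs where bv: "b = v # vs" by (cases b, auto)
  from gram_schmidt_result[OF bc dist_b indep refl, folded ws_def]
  have orth: "corthogonal ws" and wsc: "set ws \<subseteq> carrier_vec n" and len: "length ws = n"
    by (auto simp: len_b)
  from gram_schmidt_hd[OF v, of vs, folded bv] have hdws: "hd ws = v" unfolding ws_def .
  have ws0: "ws ! 0 = v" using hdws len n by (cases ws) auto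
  define N where "N k = (\<Sum>a<n. (cmod ((ws ! k) $ a))^2)" for k
  have wsk: "k < n \<Longrightarrow> ws ! k \<in> carrier_vec n" for k using wsc len by auto
  have Neq: "k < n \<Longrightarrow> ws ! k \<bullet>c ws ! k = complex_of_real (N k)" for k
    using cself_real[OF wsk] by (simp add: N_def)
  have Npos: "k < n \<Longrightarrow> N k > 0" for k
  proof -
    assume k: "k < n"
    have "ws ! k \<bullet>c ws ! k \<noteq> 0" using corthogonalD[OF orth, of k k] k len by auto
    then have "N k \<noteq> 0" using Neq[OF k] by auto
    moreover have "N k \<ge> 0" by (simp add: N_def sum_nonneg)
    ultimately show ?thesis by simp
  qed
  define W where "W a k = (ws ! k) $ a / complex_of_real (sqrt (N k))" for a k
  have "unit_fun n W"
  proof (rule unit_square)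
    fix i j assume ij: "i < n" "j < n"
    have "(\<Sum>a<n. cnj (W a i) * W a j) = (ws ! j \<bullet>c ws ! i) / (complex_of_real (sqrt (N i)) * complex_of_real (sqrt (N j)))"
      using wsk[OF ij(1)] wsk[OF ij(2)]
      by (simp add: W_def scalar_prod_def atLeast0LessThan sum_divide_distrib mult_ac)
    also have "\<dots> = (if i = j then 1 else 0)"
    proof (cases "i = j")
      case True
      have "complex_of_real (sqrt (N i)) * complex_of_real (sqrt (N i)) = complex_of_real (N i)"
        using Npos[OF ij(1)] by (simp flip: of_real_mult)
      then show ?thesis using True Neq[OF ij(1)] Npos[OF ij(1)] by simp
    next
      case False
      then have "ws ! j \<bullet>c ws ! i = 0" using corthogonalD[OF orth, of j i] ij len by auto
      then show ?thesis using False by simp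
    qed
    finally show "(\<Sum>a<n. cnj (W a i) * W a j) = (if i = j then 1 else 0)" .
  qed
  moreover have "\<forall>a<n. W a 0 = (1 / complex_of_real (sqrt (N 0))) * v $ a"
    by (simp add: W_def ws0)
  ultimately show ?thesis by blast
qed


lemma herm_entry:
  assumes "hermitian_mat n A" "x < n" "y < n"
  shows "A $$ (y,x) = cnj (A $$ (x,y))"
proof -
  have Ac: "A \<in> carrier_mat n n" and adj: "mat_adjoint A = A" using assms unfolding hermitian_mat_def by auto
  have "A $$ (y,x) = mat_adjoint A $$ (y,x)" using adj by simp
  also have "\<dots> = cnj (A $$ (x,y))" using Ac assms by (simp add: adjoint_index)
  finally show ?thesis .
qed

lemma herm_eigenvalue_exists:
  fixes A :: "complex mat"
  assumes "A \<in> carrier_mat n n" "n > 0"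
  shows "\<exists>e. eigenvalue A e"
proof -
  have deg: "degree (char_poly A) = n" using degree_monic_char_poly[OF assms(1)] by simp
  then have nz: "char_poly A \<noteq> 0" using assms(2) by auto
  have "size (proots (char_poly A)) = n" using size_proots_complex deg by simp
  then obtain e where "e \<in># proots (char_poly A)" using assms(2)
    by (metis gr_implies_not0 multiset_nonemptyE size_empty)
  then have "poly (char_poly A) e = 0" using nz by simp
  then show ?thesis using eigenvalue_root_char_poly[OF assms(1)] by blast
qed

theorem spectral:
  assumes "hermitian_mat n A"
  shows "\<exists>U l. spec n U l A"
  using assms
proof (induction n arbitrary: A)
  case 0
  then show ?case unfolding spec_def unit_fun_def hermitian_mat_def by auto
next
  case (Suc m)
  define n where "n = Suc m"
  have Ac: "A \<in> carrier_mat n n" using Suc.prems unfolding hermitian_mat_def n_def by auto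
  have Ah: "\<And>x y. x < n \<Longrightarrow> y < n \<Longrightarrow> A $$ (y,x) = cnj (A $$ (x,y))"
    unfolding n_def by (rule herm_entry[OF Suc.prems])
  obtain e where e: "eigenvalue A e" using herm_eigenvalue_exists[OF Ac] n_def by auto
  define v where "v = find_eigenvector A e"
  have ev: "eigenvector A v e" unfolding v_def by (rule find_eigenvector[OF Ac e])
  have vc: "v \<in> carrier_vec n" and v0: "v \<noteq> 0\<^sub>v n" and Av: "A *\<^sub>v v = e \<cdot>\<^sub>v v"
    using ev Ac unfolding eigenvector_def by auto
  obtain W k where W: "unit_fun n W" and W0: "\<And>a. a < n \<Longrightarrow> W a 0 = k * v $ a"
    using orthonormal_first[OF vc v0] by blast
  have W1: "\<And>c d. c < n \<Longrightarrow> d < n \<Longrightarrow> (\<Sum>a<n. cnj (W a c) * W a d) = (if c = d then 1 else 0)"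
    using W unfolding unit_fun_def by auto
  have AW0: "(\<Sum>y<n. A $$ (x,y) * W y 0) = e * W x 0" if "x < n" for x
  proof -
    have "(A *\<^sub>v v) $ x = (\<Sum>y<n. A $$ (x,y) * v $ y)"
      using that Ac vc by (simp add: scalar_prod_def atLeast0LessThan)
    then have "(\<Sum>y<n. A $$ (x,y) * v $ y) = e * v $ x" using Av that vc by simp
    moreover have "(\<Sum>y<n. A $$ (x,y) * W y 0) = k * (\<Sum>y<n. A $$ (x,y) * v $ y)"
      unfolding sum_distrib_left by (intro sum.cong refl) (simp add: W0)
    ultimately show ?thesis using that W0 by simp
  qed
  define A' where "A' c d = (\<Sum>x<n. \<Sum>y<n. cnj (W x c) * A $$ (x,y) * W y d)" for c d
  have A'0: "A' c 0 = e * (if c = 0 then 1 else 0)" if "c < n" for c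
  proof -
    have "A' c 0 = (\<Sum>x<n. cnj (W x c) * (\<Sum>y<n. A $$ (x,y) * W y 0))"
      by (simp add: A'_def sum_distrib_left mult_ac)
    also have "\<dots> = (\<Sum>x<n. cnj (W x c) * (e * W x 0))"
      by (intro sum.cong refl) (simp add: AW0)
    also have "\<dots> = e * (\<Sum>x<n. cnj (W x c) * W x 0)"
      by (simp add: sum_distrib_left mult_ac)
    also have "\<dots> = e * (if c = 0 then 1 else 0)" using W1[OF that, of 0] n_def by simp
    finally show ?thesis .
  qed
  have A'h: "A' d c = cnj (A' c d)" if "c < n" "d < n" for c d
  proof -
    have "cnj (A' c d) = (\<Sum>x<n. \<Sum>y<n. W x c * cnj (A $$ (x,y)) * cnj (W y d))"
      unfolding A'_def by simp
    also have "\<dots> = (\<Sum>x<n. \<Sum>y<n. W x c * A $$ (y,x) * cnj (W y d))"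
      by (intro sum.cong refl) (simp add: Ah[symmetric])
    also have "\<dots> = (\<Sum>y<n. \<Sum>x<n. W x c * A $$ (y,x) * cnj (W y d))"
      by (rule sum.swap)
    also have "\<dots> = A' d c" unfolding A'_def by (simp add: mult_ac)
    finally show ?thesis by simp
  qed
  have n0: "0 < n" by (simp add: n_def)
  have ereal: "e = complex_of_real (Re e)"
  proof -
    have "A' 0 0 = e" using A'0[OF n0] by simp
    moreover have "A' 0 0 = cnj (A' 0 0)" using A'h[OF n0 n0] .
    ultimately have "e = cnj e" by simp
    then have "e \<in> \<real>" using Reals_cnj_iff by metis
    then show ?thesis by (simp add: of_real_Re)
  qed
  have ce: "cnj e = e" using ereal by (metis complex_cnj_complex_of_real)
  have A'0r: "A' 0 d = e * (if d = 0 then 1 else 0)" if "d < n" for d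
  proof -
    have "A' 0 d = cnj (A' d 0)" using A'h[OF that n0] .
    also have "\<dots> = cnj e * (if d = 0 then 1 else 0)" using A'0[OF that] by simp
    finally show ?thesis using ce by simp
  qed
  define A3 where "A3 = mat m m (\<lambda>(i,j). A' (Suc i) (Suc j))"
  have "hermitian_mat m A3"
    unfolding hermitian_mat_def
  proof (intro conjI)
    show A3c: "A3 \<in> carrier_mat m m" by (simp add: A3_def)
    show "mat_adjoint A3 = A3"
    proof (rule eq_matI)
      fix i j assume "i < dim_row A3" "j < dim_col A3"
      then have ij: "i < m" "j < m" by (auto simp: A3_def)
      then show "mat_adjoint A3 $$ (i,j) = A3 $$ (i,j)"
        using A'h[of "Suc j" "Suc i"] by (simp add: A3_def adjoint_index n_def)
    qed (auto simp: A3_def adjoint_index)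
  qed
  then obtain U3 l3 where sp3: "spec m U3 l3 A3" using Suc.IH by blast
  have U3: "unit_fun m U3" and A3e: "\<And>a b. a<m \<Longrightarrow> b<m \<Longrightarrow> A3 $$ (a,b) = (\<Sum>i<m. U3 a i * of_real (l3 i) * cnj (U3 b i))"
    using sp3 unfolding spec_def by auto
  have U31: "\<And>c d. c < m \<Longrightarrow> d < m \<Longrightarrow> (\<Sum>a<m. cnj (U3 a c) * U3 a d) = (if c = d then 1 else 0)"
    using U3 unfolding unit_fun_def by auto
  define V where "V c i = (if c = 0 then (if i = 0 then 1 else 0) else (if i = 0 then 0 else U3 (c - 1) (i - 1)))" for c i
  define L where "L i = (if i = 0 then Re e else l3 (i - 1))" for i
  have V: "unit_fun n V"
  proof (rule unit_square)
    fix i j assume ij: "i < n" "j < n"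
    show "(\<Sum>a<n. cnj (V a i) * V a j) = (if i = j then 1 else 0)"
    proof (cases i)
      case 0
      then show ?thesis unfolding n_def by (subst sum.lessThan_Suc_shift) (simp add: V_def)
    next
      case (Suc i')
      show ?thesis
      proof (cases j)
        case 0
        then show ?thesis using Suc unfolding n_def by (subst sum.lessThan_Suc_shift) (simp add: V_def)
      next
        case (Suc j')
        then show ?thesis using \<open>i = Suc i'\<close> ij U31[of i' j'] unfolding n_def
          by (subst sum.lessThan_Suc_shift) (simp add: V_def)
      qed
    qed
  qed
  have A'V: "A' c d = (\<Sum>i<n. V c i * complex_of_real (L i) * cnj (V d i))" if "c < n" "d < n" for c d
  proof (cases c)
    case 0
    then show ?thesis using A'0r[OF that(2)] ereal unfolding n_def
      by (subst sum.lessThan_Suc_shift) (auto simp: V_def L_def)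
  next
    case (Suc c')
    show ?thesis
    proof (cases d)
      case 0
      then show ?thesis using A'0[OF that(1)] Suc unfolding n_def
        by (subst sum.lessThan_Suc_shift) (auto simp: V_def L_def)
    next
      case (Suc d')
      have "A' c d = A3 $$ (c', d')" using that \<open>c = Suc c'\<close> Suc by (simp add: A3_def n_def)
      also have "\<dots> = (\<Sum>i<m. U3 c' i * of_real (l3 i) * cnj (U3 d' i))"
        using that \<open>c = Suc c'\<close> Suc by (simp add: A3e n_def)
      finally show ?thesis using \<open>c = Suc c'\<close> Suc unfolding n_def
        by (subst sum.lessThan_Suc_shift) (simp add: V_def L_def)
    qed
  qed
  define U where "U a i = (\<Sum>c<n. W a c * V c i)" for a i
  have "unit_fun n U" unfolding U_def by (rule unit_mult[OF W V])
  moreover have "A $$ (a,b) = (\<Sum>i<n. U a i * complex_of_real (L i) * cnj (U b i))"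
    if ab: "a < n" "b < n" for a b
  proof -
    have "A $$ (a,b) = (\<Sum>c<n. \<Sum>d<n. W a c * A' c d * cnj (W b d))"
      unfolding A'_def by (rule unconj[OF W ab, symmetric])
    also have "\<dots> = (\<Sum>c<n. \<Sum>d<n. W a c * (\<Sum>i<n. V c i * complex_of_real (L i) * cnj (V d i)) * cnj (W b d))"
      by (intro sum.cong refl) (simp add: A'V)
    also have "\<dots> = (\<Sum>i<n. U a i * complex_of_real (L i) * cnj (U b i))"
      unfolding U_def by (rule compose)
    finally show ?thesis .
  qed
  ultimately have "spec n U L A" using Ac unfolding spec_def by auto
  then show ?case unfolding n_def by blast
qed


lemma sum_mset_upt: "(\<Sum>x\<in>#image_mset g (mset [0..<n]). f x) = (\<Sum>i<n. f (g i))"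
  by (induction n) (auto simp: add.commute)

lemma spec_entropy:
  assumes "spec n U l M"
  shows "entropy M = - (\<Sum>i<n. xlogx (l i))"
  unfolding entropy_def spec_eigvals[OF assms] sum_mset_upt by simp

lemma spec_energy_real:
  assumes "spec n U h H" "spec n V p S"
  shows "energy H S = (\<Sum>i<n. \<Sum>j<n. h i * p j * (cmod (wm n U V i j))^2)"
proof -
  have "energy H S = Re (\<Sum>i<n. \<Sum>j<n. of_real (h i) * of_real (p j) * (cnj (wm n U V i j) * wm n U V i j))"
    unfolding energy_def spec_energy[OF assms] ..
  also have "\<dots> = (\<Sum>i<n. \<Sum>j<n. h i * p j * (cmod (wm n U V i j))^2)"
    unfolding cnj_mult_self Re_sum by (simp del: of_real_power)
  finally show ?thesis .
qed

definition Zf :: "nat \<Rightarrow> (nat \<Rightarrow> real) \<Rightarrow> real \<Rightarrow> real" where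
  "Zf n h \<beta> = (\<Sum>k<n. exp (- \<beta> * h k))"
definition qf :: "nat \<Rightarrow> (nat \<Rightarrow> real) \<Rightarrow> real \<Rightarrow> nat \<Rightarrow> real" where
  "qf n h \<beta> i = exp (- \<beta> * h i) / Zf n h \<beta>"

lemma Zf_pos: "n > 0 \<Longrightarrow> Zf n h \<beta> > 0"
  unfolding Zf_def by (intro sum_pos) auto

lemma qf_pos: "n > 0 \<Longrightarrow> qf n h \<beta> i > 0"
  using Zf_pos by (simp add: qf_def)

lemma qf_sum: "n > 0 \<Longrightarrow> (\<Sum>i<n. qf n h \<beta> i) = 1"
  using Zf_pos[of n h \<beta>] by (simp add: qf_def Zf_def flip: sum_divide_distrib)

lemma gibbs_spec:
  assumes "spec n U h H" "n > 0"
  shows "spec n U (qf n h \<beta>) (gibbs H \<beta>)"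
proof -
  define E where "E = mat_exp ((- complex_of_real \<beta>) \<cdot>\<^sub>m H)"
  have "spec n U (\<lambda>i. (- \<beta>) * h i) (complex_of_real (- \<beta>) \<cdot>\<^sub>m H)"
    by (rule spec_scale[OF assms(1)])
  then have sE: "spec n U (\<lambda>i. exp (- \<beta> * h i)) E"
    unfolding E_def using spec_exp by fastforce
  have tr: "trace E = complex_of_real (Zf n h \<beta>)"
    unfolding spec_trace[OF sE] Zf_def by simp
  have "spec n U (\<lambda>i. (1 / Zf n h \<beta>) * exp (- \<beta> * h i)) (complex_of_real (1 / Zf n h \<beta>) \<cdot>\<^sub>m E)"
    by (rule spec_scale[OF sE])
  moreover have "gibbs H \<beta> = complex_of_real (1 / Zf n h \<beta>) \<cdot>\<^sub>m E"
    unfolding gibbs_def E_def[symmetric] tr by simp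
  moreover have "qf n h \<beta> = (\<lambda>i. exp (- (\<beta> * h i)) / Zf n h \<beta>)"
    by (rule ext) (simp add: qf_def)
  ultimately show ?thesis by simp
qed

lemma spec_state:
  assumes "spec n U l M" "\<And>i. i < n \<Longrightarrow> l i \<ge> 0" "(\<Sum>i<n. l i) = 1"
  shows "is_state n M"
  unfolding is_state_def
  using spec_hermitian[OF assms(1)] spec_psd[OF assms(1,2)] spec_trace[OF assms(1)] assms(3)
  by (simp flip: of_real_sum)

lemma state_spec:
  assumes "is_state n M"
  shows "\<exists>V p. spec n V p M \<and> (\<forall>j<n. p j \<ge> 0) \<and> (\<Sum>j<n. p j) = 1"
proof -
  have "hermitian_mat n M" using assms by (simp add: is_state_def)
  then obtain V p where sp: "spec n V p M" using spectral by blast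
  have "\<forall>j<n. p j \<ge> 0" using spec_eig_nonneg[OF sp] assms by (auto simp: is_state_def)
  moreover have "(\<Sum>j<n. p j) = 1"
  proof -
    have "complex_of_real (\<Sum>j<n. p j) = 1" using spec_trace[OF sp] assms by (simp add: is_state_def)
    then show ?thesis by (metis of_real_1 of_real_eq_iff)
  qed
  ultimately show ?thesis using sp by blast
qed

lemma energy_same:
  assumes "spec n U h H" "spec n U p S"
  shows "energy H S = (\<Sum>i<n. h i * p i)"
proof -
  have U: "unit_fun n U" using assms by (simp add: spec_def)
  have "energy H S = (\<Sum>i<n. \<Sum>j<n. h i * p j * (cmod (wm n U U i j))^2)"
    by (rule spec_energy_real[OF assms])
  also have "\<dots> = (\<Sum>i<n. \<Sum>j<n. h i * p j * (if i = j then 1 else 0))"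
    by (intro sum.cong refl) (simp add: wm_self[OF U])
  also have "\<dots> = (\<Sum>i<n. h i * p i)" by simp
  finally show ?thesis .
qed

lemma xlogx_qf: "n > 0 \<Longrightarrow> xlogx (qf n h \<beta> i) = qf n h \<beta> i * (- \<beta> * h i - ln (Zf n h \<beta>))"
  using qf_pos[of n h \<beta> i] Zf_pos[of n h \<beta>]
  by (simp add: xlogx_def qf_def ln_div)

lemma sum_xlogx_qf:
  assumes "n > 0"
  shows "(\<Sum>i<n. xlogx (qf n h \<beta> i)) = - \<beta> * (\<Sum>i<n. h i * qf n h \<beta> i) - ln (Zf n h \<beta>)"
proof -
  have "(\<Sum>i<n. xlogx (qf n h \<beta> i)) = (\<Sum>i<n. \<beta> * (h i * qf n h \<beta> i) * (-1) - ln (Zf n h \<beta>) * qf n h \<beta> i)"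
    using assms by (intro sum.cong refl) (simp add: xlogx_qf algebra_simps)
  also have "\<dots> = - \<beta> * (\<Sum>i<n. h i * qf n h \<beta> i) - ln (Zf n h \<beta>) * (\<Sum>i<n. qf n h \<beta> i)"
    by (simp add: sum_subtractf sum_distrib_left flip: sum_distrib_right)
  finally show ?thesis using qf_sum[OF assms] by simp
qed


definition sf :: "nat \<Rightarrow> (nat \<Rightarrow> real) \<Rightarrow> real \<Rightarrow> real" where
  "sf n h \<beta> = \<beta> * (\<Sum>i<n. h i * qf n h \<beta> i) + ln (Zf n h \<beta>)"

lemma entropy_gibbs:
  assumes "spec n U h H" "n > 0"
  shows "entropy (gibbs H \<beta>) = sf n h \<beta>"
  unfolding spec_entropy[OF gibbs_spec[OF assms]] sum_xlogx_qf[OF assms(2)] sf_def by simp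

lemma energy_gibbs:
  assumes "spec n U h H" "n > 0"
  shows "energy H (gibbs H \<beta>) = (\<Sum>i<n. h i * qf n h \<beta> i)"
  by (rule energy_same[OF assms(1) gibbs_spec[OF assms]])

lemma Fb_gibbs:
  assumes "spec n U h H" "n > 0" "\<beta> > 0"
  shows "beta_free_energy H \<beta> (gibbs H \<beta>) = - ln (Zf n h \<beta>) / \<beta>"
  unfolding beta_free_energy_def entropy_gibbs[OF assms(1,2)] energy_gibbs[OF assms(1,2)] sf_def
  using assms(3) by (simp add: field_simps)

lemma delta_double: "(\<Sum>i<n. \<Sum>j<n. h i * p j * (if i = j then 1 else 0)) = (\<Sum>i<(n::nat). h i * p i :: real)"
  by (intro sum.cong refl) (simp add: delta_sum1)

lemma variational:
  assumes "spec n U h H" "is_state n \<sigma>" "\<beta> > 0"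
  shows "beta_free_energy H \<beta> \<sigma> \<ge> - ln (Zf n h \<beta>) / \<beta>"
proof -
  obtain V p where sp: "spec n V p \<sigma>" and p0: "\<forall>j<n. p j \<ge> 0" and p1: "(\<Sum>j<n. p j) = 1"
    using state_spec[OF assms(2)] by blast
  have U: "unit_fun n U" and V: "unit_fun n V" using assms(1) sp by (auto simp: spec_def)
  define c where "c i j = (cmod (wm n U V i j))^2" for i j
  have csum: "(\<Sum>i<n. c i j) = 1" if "j < n" for j
  proof -
    have "complex_of_real (\<Sum>i<n. c i j) = 1"
      using wm_col[OF U V that] by (simp add: c_def cnj_mult_self del: of_real_power)
    then show ?thesis by (metis of_real_1 of_real_eq_iff)
  qed
  have rsum: "(\<Sum>j<n. c i j) = 1" if "i < n" for i
  proof -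
    have "complex_of_real (\<Sum>j<n. c i j) = 1"
      using wm_row[OF U V that] by (simp add: c_def cnj_mult_self del: of_real_power)
    then show ?thesis by (metis of_real_1 of_real_eq_iff)
  qed
  have "(\<Sum>j<n. xlogx (p j)) + \<beta> * (\<Sum>i<n. \<Sum>j<n. h i * p j * c i j) \<ge> - ln (\<Sum>i<n. exp (- \<beta> * h i))"
    by (rule gibbs_classical) (use p0 p1 csum rsum in \<open>auto simp: c_def\<close>)
  moreover have "energy H \<sigma> = (\<Sum>i<n. \<Sum>j<n. h i * p j * c i j)"
    unfolding c_def by (rule spec_energy_real[OF assms(1) sp])
  moreover have "entropy \<sigma> = - (\<Sum>j<n. xlogx (p j))" by (rule spec_entropy[OF sp])
  ultimately show ?thesis using assms(3)
    unfolding beta_free_energy_def Zf_def by (simp add: field_simps)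
qed

lemma state_entropy_bounds:
  assumes "is_state n \<sigma>"
  shows "entropy \<sigma> \<ge> 0" "entropy \<sigma> \<le> ln n"
proof -
  obtain V p where sp: "spec n V p \<sigma>" and p0: "\<forall>j<n. p j \<ge> 0" and p1: "(\<Sum>j<n. p j) = 1"
    using state_spec[OF assms] by blast
  have ent: "entropy \<sigma> = - (\<Sum>j<n. xlogx (p j))" by (rule spec_entropy[OF sp])
  have "p j \<le> 1" if "j < n" for j
  proof -
    have "p j \<le> (\<Sum>j<n. p j)" using p0 that by (intro member_le_sum) auto
    then show ?thesis using p1 by simp
  qed
  then have xn: "xlogx (p j) \<le> 0" if "j < n" for j
    using p0 that by (auto simp: xlogx_def mult_nonneg_nonpos)
  have "(\<Sum>j<n. xlogx (p j)) \<le> 0" by (rule sum_nonpos) (use xn in auto)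
  then show "entropy \<sigma> \<ge> 0" unfolding ent by simp
  have "(\<Sum>j<n. xlogx (p j)) + 0 * (\<Sum>i<n. \<Sum>j<n. (0::real) * p j * (if i = j then 1 else 0))
       \<ge> - ln (\<Sum>i<n. exp (- 0 * (0::real)))"
    by (rule gibbs_classical) (use p0 p1 in auto)
  then show "entropy \<sigma> \<le> ln n" unfolding ent by simp
qed

lemma qf_neq:
  assumes "n > 0" "i < n" "j < n" "h i \<noteq> h j" "b1 \<noteq> b2"
  shows "\<exists>k<n. qf n h b1 k \<noteq> qf n h b2 k"
proof (rule ccontr)
  assume "\<not> ?thesis"
  then have qi: "qf n h b1 i = qf n h b2 i" and qj: "qf n h b1 j = qf n h b2 j" using assms by auto
  have Z1: "Zf n h b1 > 0" and Z2: "Zf n h b2 > 0" using Zf_pos assms by auto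
  have "qf n h b1 i / qf n h b1 j = qf n h b2 i / qf n h b2 j" using qi qj by simp
  then have "exp (- b1 * h i) / exp (- b1 * h j) = exp (- b2 * h i) / exp (- b2 * h j)"
    using Z1 Z2 by (simp add: qf_def)
  then have "exp (- b1 * h i - - b1 * h j) = exp (- b2 * h i - - b2 * h j)"
    by (simp only: exp_diff)
  then have "- b1 * h i - - b1 * h j = - b2 * h i - - b2 * h j" by simp
  then have "(b1 - b2) * (h i - h j) = 0" by (simp add: algebra_simps)
  then show False using assms by simp
qed

lemma sf_strict_mono:
  assumes "n > 0" "i < n" "j < n" "h i \<noteq> h j" "0 \<le> b1" "b1 < b2"
  shows "sf n h b2 < sf n h b1"
proof -
  define E1 where "E1 = (\<Sum>i<n. h i * qf n h b1 i)"
  define E2 where "E2 = (\<Sum>i<n. h i * qf n h b2 i)"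
  define L1 where "L1 = ln (Zf n h b1)"
  define L2 where "L2 = ln (Zf n h b2)"
  have X1: "(\<Sum>i<n. xlogx (qf n h b1 i)) = - b1 * E1 - L1"
    unfolding E1_def L1_def by (rule sum_xlogx_qf[OF assms(1)])
  have X2: "(\<Sum>i<n. xlogx (qf n h b2 i)) = - b2 * E2 - L2"
    unfolding E2_def L2_def by (rule sum_xlogx_qf[OF assms(1)])
  have "(\<Sum>j<n. xlogx (qf n h b2 j)) + b1 * (\<Sum>j<n. h j * qf n h b2 j)
         > - ln (\<Sum>i<n. exp (- b1 * h i))"
  proof (rule gibbs_classical_strict)
    show "\<And>j. j < n \<Longrightarrow> 0 \<le> qf n h b2 j" using qf_pos[OF assms(1)] less_imp_le by blast
    show "(\<Sum>j<n. qf n h b2 j) = 1" by (rule qf_sum[OF assms(1)])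
    show "\<exists>j<n. qf n h b2 j \<noteq> exp (- b1 * h j) / (\<Sum>i<n. exp (- b1 * h i))"
      using qf_neq[OF assms(1-4), of b2 b1] assms(6) by (auto simp: qf_def Zf_def)
  qed
  then have s: "- b2 * E2 - L2 + b1 * E2 > - L1"
    using X2 by (simp add: E2_def L1_def Zf_def)
  have "(\<Sum>j<n. xlogx (qf n h b1 j)) + b2 * (\<Sum>i<n. \<Sum>j<n. h i * qf n h b1 j * (if i = j then 1 else 0))
         \<ge> - ln (\<Sum>i<n. exp (- b2 * h i))"
    by (rule gibbs_classical) (use qf_pos[OF assms(1)] qf_sum[OF assms(1)] in \<open>auto intro: less_imp_le\<close>)
  then have w: "- b1 * E1 - L1 + b2 * E1 \<ge> - L2"
    using X1 by (simp add: delta_double E1_def L2_def Zf_def)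
  have "(b2 - b1) * (E1 - E2) > 0" using s w by (simp add: algebra_simps)
  then have "E1 - E2 > 0" using assms(6) by (simp add: zero_less_mult_iff)
  then have "b1 * (E1 - E2) \<ge> 0" using assms(5) by simp
  then show ?thesis using s unfolding sf_def E1_def[symmetric] E2_def[symmetric] L1_def[symmetric] L2_def[symmetric]
    by (simp add: algebra_simps)
qed

lemma sf_pos:
  assumes "i < n" "j < n" "i \<noteq> j"
  shows "sf n h \<beta> > 0"
proof -
  have n: "n > 0" using assms by simp
  have q1: "qf n h \<beta> k < 1" if "k < n" for k
  proof -
    obtain k' where k': "k' < n" "k' \<noteq> k" using assms by (cases "k = i") auto
    have "qf n h \<beta> k + qf n h \<beta> k' = (\<Sum>x\<in>{k,k'}. qf n h \<beta> x)" using k' by simp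
    also have "\<dots> \<le> (\<Sum>x<n. qf n h \<beta> x)"
      using that k' qf_pos[OF n] by (intro sum_mono2) (auto intro: less_imp_le)
    finally show ?thesis using qf_sum[OF n] qf_pos[OF n, of h \<beta> k'] by simp
  qed
  have neg: "xlogx (qf n h \<beta> k) < 0" if "k < n" for k
  proof -
    have "ln (qf n h \<beta> k) < 0" using q1[OF that] qf_pos[OF n] by simp
    then show ?thesis using qf_pos[OF n, of h \<beta> k] by (simp add: xlogx_def mult_pos_neg)
  qed
  have "(\<Sum>k<n. xlogx (qf n h \<beta> k)) < (\<Sum>k<n. 0)"
    using n neg by (intro sum_strict_mono) auto
  then show ?thesis using sum_xlogx_qf[OF n, of h \<beta>] by (simp add: sf_def)
qed

lemma sf_zero: "n > 0 \<Longrightarrow> sf n h 0 = ln n"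
  by (simp add: sf_def Zf_def)


lemma count_upt: "count (image_mset f (mset [0..<n])) y = card {i. i < n \<and> f i = y}"
proof (induction n)
  case 0 then show ?case by simp
next
  case (Suc n)
  show ?case
  proof (cases "f n = y")
    case True
    have "{i. i < Suc n \<and> f i = y} = insert n {i. i < n \<and> f i = y}" using True by auto
    then show ?thesis using Suc True by simp
  next
    case False
    have "{i. i < Suc n \<and> f i = y} = {i. i < n \<and> f i = y}" using False less_Suc_eq by auto
    then show ?thesis using Suc False by simp
  qed
qed

lemma ground_index:
  assumes "spec n U h H" "nondeg_ground H"
  shows "\<exists>i0<n. h i0 = min_eig H \<and> (\<forall>i<n. i \<noteq> i0 \<longrightarrow> h i > h i0)"
proof -
  have eig: "eigvals H = image_mset (\<lambda>i. complex_of_real (h i)) (mset [0..<n])"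
    by (rule spec_eigvals[OF assms(1)])
  have me: "min_eig H = Min (h ` {..<n})"
    unfolding min_eig_def eig by (simp add: image_image atLeast0LessThan)
  have "card {i. i < n \<and> complex_of_real (h i) = complex_of_real (min_eig H)} = 1"
    using assms(2) unfolding nondeg_ground_def eig count_upt .
  then have c1: "card {i. i < n \<and> h i = min_eig H} = 1" by simp
  then obtain i0 where i0: "{i. i < n \<and> h i = min_eig H} = {i0}" by (auto simp: card_Suc_eq)
  then have i0n: "i0 < n" and hi0: "h i0 = min_eig H" by auto
  have "h i \<ge> h i0" if "i < n" for i
  proof -
    have "Min (h ` {..<n}) \<le> h i" using that by (intro Min_le) auto
    then show ?thesis using hi0 me by simp
  qed
  moreover have "h i \<noteq> h i0" if "i < n" "i \<noteq> i0" for i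
    using that i0 hi0 by auto
  ultimately show ?thesis using i0n hi0 by (intro exI[of _ i0]) force
qed


lemma spec_left:
  assumes "spec n U l M" "X \<in> carrier_mat n n" "i < n" "b < n"
  shows "(\<Sum>a<n. cnj (U a i) * (M * X) $$ (a,b)) = of_real (l i) * (\<Sum>a<n. cnj (U a i) * X $$ (a,b))"
proof -
  have Mc: "M \<in> carrier_mat n n"
    and Me: "\<And>a b. a<n \<Longrightarrow> b<n \<Longrightarrow> M $$ (a,b) = (\<Sum>i<n. U a i * of_real (l i) * cnj (U b i))"
    and U1: "\<And>i j. i<n \<Longrightarrow> j<n \<Longrightarrow> (\<Sum>a<n. cnj (U a i) * U a j) = (if i=j then 1 else 0)"
    using assms(1) unfolding spec_def unit_fun_def by auto
  have "(\<Sum>a<n. cnj (U a i) * (M * X) $$ (a,b)) = (\<Sum>a<n. cnj (U a i) * (\<Sum>c<n. M $$ (a,c) * X $$ (c,b)))"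
    using Mc assms(2,4) by (intro sum.cong refl) (simp add: scalar_prod_def atLeast0LessThan)
  also have "\<dots> = (\<Sum>a<n. \<Sum>c<n. \<Sum>j<n. of_real (l j) * cnj (U c j) * X $$ (c,b) * (cnj (U a i) * U a j))"
    by (intro sum.cong refl) (simp add: Me sum_distrib_left sum_distrib_right mult_ac)
  also have "\<dots> = (\<Sum>c<n. \<Sum>a<n. \<Sum>j<n. of_real (l j) * cnj (U c j) * X $$ (c,b) * (cnj (U a i) * U a j))"
    by (rule sum.swap)
  also have "\<dots> = (\<Sum>c<n. \<Sum>j<n. \<Sum>a<n. of_real (l j) * cnj (U c j) * X $$ (c,b) * (cnj (U a i) * U a j))"
    by (rule sum.cong[OF refl], rule sum.swap)
  also have "\<dots> = (\<Sum>c<n. \<Sum>j<n. of_real (l j) * cnj (U c j) * X $$ (c,b) * (if i = j then 1 else 0))"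
    using assms(3) by (intro sum.cong refl) (simp add: U1 flip: sum_distrib_left)
  also have "\<dots> = (\<Sum>c<n. of_real (l i) * cnj (U c i) * X $$ (c,b))"
    using assms(3) by (intro sum.cong refl) (rule delta_sum1)
  also have "\<dots> = of_real (l i) * (\<Sum>a<n. cnj (U a i) * X $$ (a,b))"
    by (simp add: sum_distrib_left mult_ac)
  finally show ?thesis .
qed

definition gprop :: "nat \<Rightarrow> complex mat \<Rightarrow> complex mat \<Rightarrow> bool" where
  "gprop n H P \<longleftrightarrow> hermitian_mat n P \<and> P * P = P \<and> trace P = 1
                          \<and> H * P = complex_of_real (min_eig H) \<cdot>\<^sub>m P"

lemma ground_proj_eq:
  assumes sp: "spec n U h H" and i0: "i0 < n" and hi0: "h i0 = min_eig H"
    and gt: "\<forall>i<n. i \<noteq> i0 \<longrightarrow> h i > h i0"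
  shows "ground_proj H = mat n n (\<lambda>(a,b). U a i0 * cnj (U b i0))"
    and "spec n U (\<lambda>i. if i = i0 then 1 else 0) (mat n n (\<lambda>(a,b). U a i0 * cnj (U b i0)))"
proof -
  define P0 where "P0 = mat n n (\<lambda>(a,b). U a i0 * cnj (U b i0))"
  have Hc: "H \<in> carrier_mat n n" and U: "unit_fun n U"
    and He: "\<And>a b. a<n \<Longrightarrow> b<n \<Longrightarrow> H $$ (a,b) = (\<Sum>i<n. U a i * of_real (h i) * cnj (U b i))"
    using sp unfolding spec_def by auto
  have U1: "\<And>i j. i<n \<Longrightarrow> j<n \<Longrightarrow> (\<Sum>a<n. cnj (U a i) * U a j) = (if i=j then 1 else 0)"
    and U2: "\<And>a b. a<n \<Longrightarrow> b<n \<Longrightarrow> (\<Sum>i<n. U a i * cnj (U b i)) = (if a=b then 1 else 0)"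
    using U unfolding unit_fun_def by auto
  have spP0: "spec n U (\<lambda>i. if i = i0 then 1 else 0) P0"
  proof -
    have "P0 $$ (a,b) = (\<Sum>i<n. U a i * of_real (if i = i0 then 1 else 0) * cnj (U b i))"
      if "a < n" "b < n" for a b
    proof -
      have "(\<Sum>i<n. U a i * of_real (if i = i0 then 1 else 0) * cnj (U b i))
          = (\<Sum>i<n. if i = i0 then U a i * cnj (U b i) else 0)"
        by (intro sum.cong refl) simp
      also have "\<dots> = U a i0 * cnj (U b i0)" using i0 by (simp add: sum.delta)
      finally show ?thesis using that by (simp add: P0_def)
    qed
    then show ?thesis using U unfolding spec_def P0_def by auto
  qed
  then show "spec n U (\<lambda>i. if i = i0 then 1 else 0) (mat n n (\<lambda>(a,b). U a i0 * cnj (U b i0)))"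
    by (simp add: P0_def)
  have P0c: "P0 \<in> carrier_mat n n" by (simp add: P0_def)
  have "gprop n H P0"
    unfolding gprop_def
  proof (intro conjI)
    show "hermitian_mat n P0" by (rule spec_hermitian[OF spP0])
    show "P0 * P0 = P0"
    proof (rule eq_matI)
      fix a b assume "a < dim_row P0" "b < dim_col P0"
      then have ab: "a < n" "b < n" by (auto simp: P0_def)
      have "(P0 * P0) $$ (a,b) = (\<Sum>x<n. U a i0 * cnj (U b i0) * (cnj (U x i0) * U x i0))"
        using ab by (simp add: P0_def scalar_prod_def atLeast0LessThan mult_ac)
      also have "\<dots> = U a i0 * cnj (U b i0)" using U1[OF i0 i0] by (simp flip: sum_distrib_left)
      finally show "(P0 * P0) $$ (a,b) = P0 $$ (a,b)" using ab by (simp add: P0_def)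
    qed (auto simp: P0_def)
    have "(\<Sum>i<n. complex_of_real (if i = i0 then 1 else 0)) = (\<Sum>i<n. if i = i0 then 1 else 0)"
      by (intro sum.cong refl) simp
    then show "trace P0 = 1" using spec_trace[OF spP0] i0 by (simp add: sum.delta)
    show "H * P0 = complex_of_real (min_eig H) \<cdot>\<^sub>m P0"
    proof (rule eq_matI)
      fix a b assume "a < dim_row (complex_of_real (min_eig H) \<cdot>\<^sub>m P0)" "b < dim_col (complex_of_real (min_eig H) \<cdot>\<^sub>m P0)"
      then have ab: "a < n" "b < n" by (auto simp: P0_def)
      have "(H * P0) $$ (a,b) = (\<Sum>x<n. H $$ (a,x) * (U x i0 * cnj (U b i0)))"
        using ab Hc by (simp add: P0_def scalar_prod_def atLeast0LessThan)
      also have "\<dots> = (\<Sum>x<n. \<Sum>i<n. U a i * of_real (h i) * cnj (U b i0) * (cnj (U x i) * U x i0))"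
        by (intro sum.cong refl) (simp add: He ab sum_distrib_left sum_distrib_right mult_ac)
      also have "\<dots> = (\<Sum>i<n. \<Sum>x<n. U a i * of_real (h i) * cnj (U b i0) * (cnj (U x i) * U x i0))"
        by (rule sum.swap)
      also have "\<dots> = (\<Sum>i<n. U a i * of_real (h i) * cnj (U b i0) * (if i = i0 then 1 else 0))"
        using i0 by (intro sum.cong refl) (simp add: U1 flip: sum_distrib_left)
      also have "\<dots> = U a i0 * of_real (h i0) * cnj (U b i0)"
        using i0 by (rule delta_sum2)
      finally show "(H * P0) $$ (a,b) = (complex_of_real (min_eig H) \<cdot>\<^sub>m P0) $$ (a,b)"
        using ab hi0 by (simp add: P0_def mult_ac)
    qed (use Hc in \<open>auto simp: P0_def\<close>)
  qed
  moreover have uniq: "P = P0" if gP: "gprop n H P" for P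
  proof -
    have Pc: "P \<in> carrier_mat n n" and Ph: "hermitian_mat n P" and trP: "trace P = 1"
      and HP: "H * P = complex_of_real (h i0) \<cdot>\<^sub>m P"
      using gP hi0 unfolding gprop_def hermitian_mat_def by auto
    define Q where "Q i b = (\<Sum>a<n. cnj (U a i) * P $$ (a,b))" for i b
    have Q0: "Q i b = 0" if "i < n" "b < n" "i \<noteq> i0" for i b
    proof -
      have "of_real (h i) * Q i b = (\<Sum>a<n. cnj (U a i) * (H * P) $$ (a,b))"
        unfolding Q_def by (rule spec_left[OF sp Pc that(1,2), symmetric])
      also have "\<dots> = (\<Sum>a<n. cnj (U a i) * (of_real (h i0) * P $$ (a,b)))"
        unfolding HP using Pc that by (intro sum.cong refl) simp
      also have "\<dots> = of_real (h i0) * Q i b" by (simp add: Q_def sum_distrib_left mult_ac)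
      finally have "(of_real (h i) - of_real (h i0)) * Q i b = 0" by (simp add: algebra_simps)
      moreover have "h i \<noteq> h i0" using gt that by force
      ultimately show ?thesis by simp
    qed
    have Pexp: "P $$ (a,b) = U a i0 * Q i0 b" if "a < n" "b < n" for a b
    proof -
      have "(\<Sum>i<n. U a i * Q i b) = (\<Sum>x<n. P $$ (x,b) * (\<Sum>i<n. U a i * cnj (U x i)))"
        unfolding Q_def by (simp add: sum_distrib_left sum_distrib_right mult_ac) (rule sum.swap)
      also have "\<dots> = (\<Sum>x<n. P $$ (x,b) * (if a = x then 1 else 0))"
        using that by (intro sum.cong refl) (simp add: U2)
      also have "\<dots> = P $$ (a,b)" using that by simp
      finally have "P $$ (a,b) = (\<Sum>i<n. U a i * Q i b)" by simp
      also have "\<dots> = (\<Sum>i<n. if i = i0 then U a i * Q i b else 0)"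
        using that Q0 by (intro sum.cong refl) auto
      also have "\<dots> = U a i0 * Q i0 b" using i0 by (simp add: sum.delta)
      finally show ?thesis .
    qed
    define \<kappa> where "\<kappa> = (\<Sum>a<n. cnj (U a i0) * cnj (Q i0 a))"
    have Qform: "Q i0 b = cnj (U b i0) * \<kappa>" if "b < n" for b
    proof -
      have "Q i0 b = (\<Sum>a<n. cnj (U a i0) * cnj (P $$ (b,a)))"
        unfolding Q_def using that by (intro sum.cong refl) (metis herm_entry[OF Ph] lessThan_iff)
      also have "\<dots> = (\<Sum>a<n. cnj (U a i0) * (cnj (U b i0) * cnj (Q i0 a)))"
        using that by (intro sum.cong refl) (simp add: Pexp)
      also have "\<dots> = cnj (U b i0) * \<kappa>" by (simp add: \<kappa>_def sum_distrib_left mult_ac)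
      finally show ?thesis .
    qed
    have Pk: "P $$ (a,b) = \<kappa> * (U a i0 * cnj (U b i0))" if "a < n" "b < n" for a b
      using that by (simp add: Pexp Qform mult_ac)
    have "trace P = \<kappa> * (\<Sum>a<n. cnj (U a i0) * U a i0)"
      unfolding trace_def using Pc by (simp add: Pk sum_distrib_left mult_ac)
    then have k1: "\<kappa> = 1" using trP U1[OF i0 i0] by simp
    show "P = P0"
      by (rule eq_matI) (use Pc k1 Pk in \<open>auto simp: P0_def\<close>)
  qed
  ultimately have "(THE P. gprop n H P) = P0" by (metis the_equality)
  moreover have "ground_proj H = (THE P. gprop n H P)"
    unfolding ground_proj_def gprop_def using Hc by simp
  ultimately show "ground_proj H = mat n n (\<lambda>(a,b). U a i0 * cnj (U b i0))" by (simp add: P0_def)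
qed

lemma ground_entropy:
  assumes "spec n U h H" "i0 < n" "h i0 = min_eig H" "\<forall>i<n. i \<noteq> i0 \<longrightarrow> h i > h i0"
  shows "entropy (ground_proj H) = 0"
proof -
  have "entropy (ground_proj H) = - (\<Sum>i<n. xlogx (if i = i0 then 1 else 0))"
    unfolding ground_proj_eq(1)[OF assms] by (rule spec_entropy[OF ground_proj_eq(2)[OF assms]])
  moreover have "(\<Sum>i<n. xlogx (if i = i0 then 1 else 0)) = 0"
    by (intro sum.neutral ballI) (simp add: xlogx_def)
  ultimately show ?thesis by simp
qed


lemma Zsum_pos: "(n::nat) > 0 \<Longrightarrow> (\<Sum>k<n. exp (- \<beta> * h k)) > (0::real)"
  by (intro sum_pos) auto

lemma sf_cont:
  assumes "n > 0"
  shows "continuous_on S (sf n h)"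
proof -
  have Zc: "continuous_on S (\<lambda>\<beta>. Zf n h \<beta>)" unfolding Zf_def by (intro continuous_intros)
  have Zne: "\<forall>\<beta>\<in>S. Zf n h \<beta> \<noteq> 0" using Zf_pos[OF assms] by (metis less_irrefl)
  have "continuous_on S (\<lambda>\<beta>. \<beta> * (\<Sum>i<n. h i * (exp (- \<beta> * h i) / Zf n h \<beta>)) + ln (Zf n h \<beta>))"
    using Zc Zne by (intro continuous_intros continuous_on_ln) auto
  moreover have "sf n h = (\<lambda>\<beta>. \<beta> * (\<Sum>i<n. h i * (exp (- \<beta> * h i) / Zf n h \<beta>)) + ln (Zf n h \<beta>))"
    by (rule ext) (simp add: sf_def qf_def)
  ultimately show ?thesis by simp
qed

lemma sf_bound:
  assumes i0: "i0 < n" and gt: "\<forall>i<n. i \<noteq> i0 \<longrightarrow> h i > h i0" and b: "\<beta> \<ge> 0"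
  shows "sf n h \<beta> \<le> (\<Sum>i\<in>{..<n} - {i0}. (1 + \<beta> * (h i - h i0)) * exp (- \<beta> * (h i - h i0)))"
proof -
  define c where "c = h i0"
  define x where "x i = h i - c" for i
  define A where "A = {..<n} - {i0}"
  define T where "T = (\<Sum>i\<in>A. exp (- \<beta> * x i))"
  define Y where "Y = (\<Sum>i<n. exp (- \<beta> * x i))"
  have n: "n > 0" using i0 by simp
  have x0: "x i0 = 0" by (simp add: x_def c_def)
  have xpos: "i \<in> A \<Longrightarrow> x i > 0" for i using gt by (auto simp: A_def x_def c_def)
  have T0: "T \<ge> 0" by (simp add: T_def sum_nonneg)
  have YT: "Y = 1 + T"
    unfolding Y_def T_def A_def using i0 x0 by (simp add: sum.remove[of "{..<n}" i0])
  have Y1: "Y \<ge> 1" using YT T0 by simp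
  have Z: "Zf n h \<beta> = exp (- \<beta> * c) * Y"
    unfolding Zf_def Y_def sum_distrib_left
    by (intro sum.cong refl) (simp add: x_def flip: exp_add, simp add: algebra_simps)
  have q: "qf n h \<beta> i = exp (- \<beta> * x i) / Y" for i
  proof -
    have e: "exp (- \<beta> * h i) = exp (- \<beta> * c) * exp (- \<beta> * x i)"
      by (simp add: x_def algebra_simps flip: exp_add)
    show ?thesis unfolding qf_def Z e by simp
  qed
  have lnZ: "ln (Zf n h \<beta>) = - \<beta> * c + ln Y" using Y1 by (simp add: Z ln_mult)
  have lnY: "ln Y \<le> T" using ln_le_minus_one[of Y] Y1 YT by simp
  have qs: "(\<Sum>i<n. qf n h \<beta> i) = 1" by (rule qf_sum[OF n])
  have "(\<Sum>i<n. h i * qf n h \<beta> i) = (\<Sum>i<n. c * qf n h \<beta> i + x i * qf n h \<beta> i)"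
    by (intro sum.cong refl) (simp add: x_def algebra_simps)
  also have "\<dots> = c + (\<Sum>i<n. x i * qf n h \<beta> i)"
    by (simp add: sum.distrib qs flip: sum_distrib_left)
  also have "(\<Sum>i<n. x i * qf n h \<beta> i) = (\<Sum>i\<in>A. x i * qf n h \<beta> i)"
    unfolding A_def using i0 x0 by (simp add: sum.remove[of "{..<n}" i0])
  also have "\<dots> \<le> (\<Sum>i\<in>A. x i * exp (- \<beta> * x i))"
  proof (intro sum_mono)
    fix i assume "i \<in> A"
    have "exp (- \<beta> * x i) / Y \<le> exp (- \<beta> * x i)" using Y1 by (simp add: divide_le_eq)
    then show "x i * qf n h \<beta> i \<le> x i * exp (- \<beta> * x i)"
      unfolding q using xpos[OF \<open>i \<in> A\<close>] by (intro mult_left_mono) auto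
  qed
  finally have E: "(\<Sum>i<n. h i * qf n h \<beta> i) \<le> c + (\<Sum>i\<in>A. x i * exp (- \<beta> * x i))" by simp
  have "sf n h \<beta> = \<beta> * (\<Sum>i<n. h i * qf n h \<beta> i) - \<beta> * c + ln Y"
    by (simp add: sf_def lnZ)
  also have "\<dots> \<le> \<beta> * (c + (\<Sum>i\<in>A. x i * exp (- \<beta> * x i))) - \<beta> * c + T"
    using E b lnY by (intro add_mono diff_mono mult_left_mono) auto
  also have "\<dots> = (\<Sum>i\<in>A. (1 + \<beta> * x i) * exp (- \<beta> * x i))"
    by (simp add: T_def algebra_simps sum.distrib sum_distrib_left)
  finally show ?thesis by (simp add: A_def x_def c_def)
qed

lemma term_lim:
  assumes "(x::real) > 0"
  shows "((\<lambda>\<beta>. (1 + \<beta> * x) * exp (- \<beta> * x)) \<longlongrightarrow> 0) at_top"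
proof -
  have g: "((\<lambda>y::real. y ^ 0 / exp y + y ^ 1 / exp y) \<longlongrightarrow> 0 + 0) at_top"
    by (intro tendsto_add tendsto_power_div_exp_0)
  have f: "filterlim (\<lambda>\<beta>. \<beta> * x) at_top at_top"
    by (rule filterlim_at_top_mult_tendsto_pos[OF tendsto_const assms filterlim_ident])
  have "((\<lambda>\<beta>. (\<beta> * x) ^ 0 / exp (\<beta> * x) + (\<beta> * x) ^ 1 / exp (\<beta> * x)) \<longlongrightarrow> 0) at_top"
    using filterlim_compose[OF g f] by simp
  moreover have "(\<lambda>\<beta>. (\<beta> * x) ^ 0 / exp (\<beta> * x) + (\<beta> * x) ^ 1 / exp (\<beta> * x))
      = (\<lambda>\<beta>. (1 + \<beta> * x) * exp (- \<beta> * x))"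
    by (rule ext) (simp add: exp_minus field_simps)
  ultimately show ?thesis by simp
qed

lemma sf_small:
  assumes i0: "i0 < n" and gt: "\<forall>i<n. i \<noteq> i0 \<longrightarrow> h i > h i0" and S: "S > 0"
  shows "\<exists>R\<ge>0. sf n h R < S"
proof -
  define B where "B \<beta> = (\<Sum>i\<in>{..<n} - {i0}. (1 + \<beta> * (h i - h i0)) * exp (- \<beta> * (h i - h i0)))" for \<beta>
  have "(B \<longlongrightarrow> (\<Sum>i\<in>{..<n} - {i0}. 0)) at_top"
    unfolding B_def by (intro tendsto_sum term_lim) (use gt in auto)
  then have "(B \<longlongrightarrow> 0) at_top" by simp
  then have "eventually (\<lambda>\<beta>. B \<beta> < S) at_top" using S by (intro order_tendstoD(2)) auto
  then obtain N where N: "\<And>\<beta>. \<beta> \<ge> N \<Longrightarrow> B \<beta> < S" by (auto simp: eventually_at_top_linorder)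
  define R where "R = max N 0"
  have "sf n h R \<le> B R" unfolding B_def by (rule sf_bound[OF i0 gt]) (simp add: R_def)
  also have "\<dots> < S" by (rule N) (simp add: R_def)
  finally show ?thesis by (intro exI[of _ R]) (simp add: R_def)
qed

lemma sf_hits:
  assumes i0: "i0 < n" and gt: "\<forall>i<n. i \<noteq> i0 \<longrightarrow> h i > h i0" and S: "S > 0" "S \<le> ln n"
  shows "\<exists>r\<ge>0. sf n h r = S"
proof -
  have n: "n > 0" using i0 by simp
  obtain R where R: "R \<ge> 0" "sf n h R < S" using sf_small[OF i0 gt S(1)] by blast
  have "\<exists>x\<ge>0. x \<le> R \<and> sf n h x = S"
    by (rule IVT2') (use R S sf_zero[OF n] sf_cont[OF n] in auto)
  then show ?thesis by blast
qed


lemma ent_e: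
  assumes sp: "spec n U h H" and i0: "i0 < n" and hi0: "h i0 = min_eig H"
    and gt: "\<forall>i<n. i \<noteq> i0 \<longrightarrow> h i > h i0" and b: "0 \<le> b"
  shows "entropy (gibbs_e H b) = (case b of ereal r \<Rightarrow> sf n h r | _ \<Rightarrow> 0)"
proof (cases b)
  case (real r)
  then show ?thesis using entropy_gibbs[OF sp] i0 by (simp add: gibbs_e_def)
next
  case PInf
  then show ?thesis using ground_entropy[OF sp i0 hi0 gt] by (simp add: gibbs_e_def)
next
  case MInf
  then show ?thesis using b by simp
qed

lemma beta_intr_char:
  assumes sp: "spec n U h H" and i0: "i0 < n" and hi0: "h i0 = min_eig H"
    and gt: "\<forall>i<n. i \<noteq> i0 \<longrightarrow> h i > h i0" and n2: "n \<ge> 2" and st: "is_state n \<rho>"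
  shows "0 \<le> beta_intr H \<rho> \<and> entropy (gibbs_e H (beta_intr H \<rho>)) = entropy \<rho>"
proof -
  let ?P = "\<lambda>b. 0 \<le> b \<and> entropy (gibbs_e H b) = entropy \<rho>"
  have "\<exists>j<n. j \<noteq> i0"
  proof (cases "i0 = 0")
    case True then show ?thesis using n2 by (intro exI[of _ 1]) auto
  next
    case False then show ?thesis using i0 by (intro exI[of _ 0]) auto
  qed
  then obtain j where j: "j < n" "j \<noteq> i0" by blast
  have hj: "h j \<noteq> h i0" using gt j by force
  have n: "n > 0" using i0 by simp
  have ex: "\<exists>b. ?P b"
  proof (cases "entropy \<rho> = 0")
    case True
    then show ?thesis using ent_e[OF sp i0 hi0 gt, of \<infinity>] by (intro exI[of _ \<infinity>]) simp
  next
    case False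
    then have S: "entropy \<rho> > 0" "entropy \<rho> \<le> ln n" using state_entropy_bounds[OF st] by auto
    obtain r where r: "r \<ge> 0" "sf n h r = entropy \<rho>" using sf_hits[OF i0 gt S] by blast
    show ?thesis using ent_e[OF sp i0 hi0 gt, of "ereal r"] r by (intro exI[of _ "ereal r"]) simp
  qed
  have sf_inj: "r1 = r2" if "r1 \<ge> 0" "r2 \<ge> 0" "sf n h r1 = sf n h r2" for r1 r2
  proof (rule ccontr)
    assume "r1 \<noteq> r2"
    then consider "r1 < r2" | "r2 < r1" by linarith
    then show False
    proof cases
      case 1
      then show False using sf_strict_mono[OF n j(1) i0 hj that(1) 1] that(3) by simp
    next
      case 2
      then show False using sf_strict_mono[OF n j(1) i0 hj that(2) 2] that(3) by simp
    qed
  qed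
  have sfp: "sf n h r \<noteq> 0" for r using sf_pos[OF j(1) i0 j(2)] by (metis less_irrefl)
  have un: "b1 = b2" if "?P b1" "?P b2" for b1 b2
  proof -
    have e1: "entropy (gibbs_e H b1) = (case b1 of ereal r \<Rightarrow> sf n h r | _ \<Rightarrow> 0)"
      using ent_e[OF sp i0 hi0 gt] that(1) by blast
    have e2: "entropy (gibbs_e H b2) = (case b2 of ereal r \<Rightarrow> sf n h r | _ \<Rightarrow> 0)"
      using ent_e[OF sp i0 hi0 gt] that(2) by blast
    have eq: "(case b1 of ereal r \<Rightarrow> sf n h r | _ \<Rightarrow> 0) = (case b2 of ereal r \<Rightarrow> sf n h r | _ \<Rightarrow> 0)"
      using e1 e2 that by simp
    show ?thesis
    proof (cases b1)
      case (real r1)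
      show ?thesis
      proof (cases b2)
        case (real r2)
        then show ?thesis using \<open>b1 = ereal r1\<close> eq that sf_inj[of r1 r2] by simp
      next
        case PInf
        then show ?thesis using \<open>b1 = ereal r1\<close> eq sfp by simp
      next
        case MInf
        then show ?thesis using that by simp
      qed
    next
      case PInf
      show ?thesis
      proof (cases b2)
        case (real r2)
        then show ?thesis using \<open>b1 = \<infinity>\<close> eq sfp by simp
      next
        case PInf
        then show ?thesis using \<open>b1 = \<infinity>\<close> by simp
      next
        case MInf
        then show ?thesis using that by simp
      qed
    next
      case MInf
      then show ?thesis using that by simp
    qed
  qed
  have "\<exists>!b. ?P b" using ex un by blast
  then have "?P (THE b. ?P b)" by (rule theI')
  then show ?thesis unfolding beta_intr_def .
qed


theorem mainTheorem2:
  fixes d :: nat and H \<rho> :: "complex mat"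
  assumes "d \<ge> 2"
    and "hermitian_mat d H"
    and "nondeg_ground H"
    and "is_state d \<rho>"
  shows "(\<forall>\<beta>>0. free_energy H \<rho>
            \<le> beta_free_energy H \<beta> \<rho> - beta_free_energy H \<beta> (gibbs H \<beta>))
       \<and> (0 < beta_intr H \<rho> \<and> beta_intr H \<rho> < \<infinity> \<longrightarrow>
            (let b = real_of_ereal (beta_intr H \<rho>) in
               free_energy H \<rho> = beta_free_energy H b \<rho> - beta_free_energy H b (gibbs H b)
             \<and> free_energy H \<rho> =
                 (INF \<beta>\<in>{0<..}. beta_free_energy H \<beta> \<rho> - beta_free_energy H \<beta> (gibbs H \<beta>))))"
proof -
  obtain U h where sp: "spec d U h H" using spectral[OF assms(2)] by blast
  have d0: "d > 0" using assms(1) by simp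
  obtain i0 where i0: "i0 < d" and hi0: "h i0 = min_eig H" and gt: "\<forall>i<d. i \<noteq> i0 \<longrightarrow> h i > h i0"
    using ground_index[OF sp assms(3)] by blast
  have Hc: "H \<in> carrier_mat d d" using sp by (simp add: spec_def)
  define St where "St = {\<sigma>. is_state d \<sigma> \<and> entropy \<sigma> = entropy \<rho>}"
  have BE: "bound_energy H \<rho> = Inf (energy H ` St)"
    unfolding bound_energy_def St_def using Hc by simp
  have rhoSt: "\<rho> \<in> St" using assms(4) by (simp add: St_def)
  have lowb: "energy H \<sigma> \<ge> - ln (Zf d h \<beta>) / \<beta> + entropy \<rho> / \<beta>" if "\<sigma> \<in> St" "\<beta> > 0" for \<sigma> \<beta>
    using variational[OF sp _ that(2), of \<sigma>] that unfolding St_def beta_free_energy_def by auto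
  have Fb: "beta_free_energy H \<beta> (gibbs H \<beta>) = - ln (Zf d h \<beta>) / \<beta>" if "\<beta> > 0" for \<beta>
    by (rule Fb_gibbs[OF sp d0 that])
  have part1: "free_energy H \<rho> \<le> beta_free_energy H \<beta> \<rho> - beta_free_energy H \<beta> (gibbs H \<beta>)"
    if b: "\<beta> > 0" for \<beta>
  proof -
    have "- ln (Zf d h \<beta>) / \<beta> + entropy \<rho> / \<beta> \<le> Inf (energy H ` St)"
      using rhoSt lowb[OF _ b] by (intro cInf_greatest) auto
    moreover have "beta_free_energy H \<beta> \<rho> - beta_free_energy H \<beta> (gibbs H \<beta>)
        = energy H \<rho> - entropy \<rho> / \<beta> + ln (Zf d h \<beta>) / \<beta>"
      using Fb[OF b] by (simp add: beta_free_energy_def[of H \<beta> \<rho>])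
    ultimately show ?thesis unfolding free_energy_def BE by simp
  qed
  have bdd: "bdd_below (energy H ` St)"
    using lowb[of _ 1] unfolding bdd_below_def by auto
  have part2: "let b = real_of_ereal (beta_intr H \<rho>) in
               free_energy H \<rho> = beta_free_energy H b \<rho> - beta_free_energy H b (gibbs H b)
             \<and> free_energy H \<rho> =
                 (INF \<beta>\<in>{0<..}. beta_free_energy H \<beta> \<rho> - beta_free_energy H \<beta> (gibbs H \<beta>))"
    if bi: "0 < beta_intr H \<rho>" "beta_intr H \<rho> < \<infinity>"
  proof -
    have ch: "entropy (gibbs_e H (beta_intr H \<rho>)) = entropy \<rho>"
      using beta_intr_char[OF sp i0 hi0 gt assms(1,4)] by blast
    obtain r where r: "beta_intr H \<rho> = ereal r" using bi by (cases "beta_intr H \<rho>") auto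
    have r0: "r > 0" using bi r by simp
    have ent: "entropy (gibbs H r) = entropy \<rho>" using ch r by (simp add: gibbs_e_def)
    have gst: "is_state d (gibbs H r)"
      using spec_state[OF gibbs_spec[OF sp d0], of r] qf_pos[OF d0] qf_sum[OF d0] by (auto intro: less_imp_le)
    then have "gibbs H r \<in> St" using ent by (simp add: St_def)
    then have "Inf (energy H ` St) \<le> energy H (gibbs H r)" using bdd by (intro cInf_lower) auto
    then have ge: "free_energy H \<rho> \<ge> beta_free_energy H r \<rho> - beta_free_energy H r (gibbs H r)"
      unfolding free_energy_def BE beta_free_energy_def ent by simp
    have eq: "free_energy H \<rho> = beta_free_energy H r \<rho> - beta_free_energy H r (gibbs H r)"
      using ge part1[OF r0] by linarith
    define g where "g \<beta> = beta_free_energy H \<beta> \<rho> - beta_free_energy H \<beta> (gibbs H \<beta>)" for \<beta>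
    have "(INF \<beta>\<in>{0<..}. g \<beta>) \<le> g r"
      using part1 r0 unfolding g_def by (intro cINF_lower) (auto simp: bdd_below_def)
    moreover have "free_energy H \<rho> \<le> (INF \<beta>\<in>{0<..}. g \<beta>)"
      using part1 unfolding g_def by (intro cINF_greatest) auto
    ultimately have "free_energy H \<rho> = (INF \<beta>\<in>{0<..}. g \<beta>)" using eq unfolding g_def by linarith
    then show ?thesis using eq r unfolding Let_def g_def by simp
  qed
  show ?thesis using part1 part2 by blast
qed


end
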